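(* Fix $\eta>0$ and let $(\lambda^{(k)})_{k\ge0}$ be the iterates of the Accel-EMP procedure (with $\lambda^{(0)}=0$). Then for every $k\ge0$, $$\mathbb{E}\big[L(\lambda^{(k)})\big]-\inf_{\lambda}L(\lambda)\ \le\ \frac{G(\eta)^2}{(k+2)^2},\qquad G(\eta):=24md(m+n)\Big(\sqrt\eta\,\|C\|_\infty+\frac{\log d}{\sqrt\eta}\Big).$$
   Context: Let $G=(V,E)$ be a finite undirected graph with $n=|V|$, $m=|E|$, every vertex incident to at least one edge; $N_i=\{e\in E:i\in e\}$. $\chi$ is a finite label set with $d=|\chi|\ge2$. Costs $C_i\in\mathbb{R}^\chi$, $C_e\in\mathbb{R}^{\chi^2}$; $\|C\|_\infty$ is the largest absolute entry; for $e=\{i,j\}$, $x_e=(x_i,x_j)$, $(x_e)_i=x_i$. Dual variables $\lambda\in\mathbb{R}^{2md}$ with blocks $\lambda_{e,i}\in\mathbb{R}^\chi$, and $$L(\lambda)=\frac1\eta\sum_{i\in V}\log\sum_{x\in\chi}\exp\Big(-\eta C_i(x)+\eta\sum_{e\in N_i}\lambda_{e,i}(x)\Big)+\frac1\eta\sum_{e\in E}\log\sum_{x_e\in\chi^2}\exp\Big(-\eta C_e(x_e)-\eta\sum_{i\in e}\lambda_{e,i}((x_e)_i)\Big).$$ $\mu^\lambda_i$, $\mu^\lambda_e$ are the normalized distributions proportional to the exponentials inside the two sums; $S^\lambda_{e,i}(x)=\sum_{x_e:(x_e)_i=x}\mu^\lambda_e(x_e)$; slack $\nu^\lambda_{e,i}=S^\lambda_{e,i}-\mu^\lambda_i$.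 Accel-EMP: $\lambda^{(0)}=v^{(0)}=0$, $\theta_{-1}=1$; for $k\ge0$: $\theta_k=\frac{-\theta_{k-1}^2+\sqrt{\theta_{k-1}^4+4\theta_{k-1}^2}}{2}$; $y^{(k)}=\theta_kv^{(k)}+(1-\theta_k)\lambda^{(k)}$; sample $(e_k,i_k)$ independently and uniformly from $\{(e,i):e\in E,i\in e\}$; $\lambda^{(k+1)}$ equals $y^{(k)}$ except block $(e_k,i_k)$ is set to $y^{(k)}_{e_k,i_k}(x)+\frac{1}{2\eta}\log(S^{y^{(k)}}_{e_k,i_k}(x)/\mu^{y^{(k)}}_{i_k}(x))$; $v^{(k+1)}$ equals $v^{(k)}$ except $v^{(k+1)}_{e_k,i_k}=v^{(k)}_{e_k,i_k}+\frac{1}{4m\eta\theta_k}\nu^{y^{(k)}}_{e_k,i_k}$. *)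

theory Defs
  imports "HOL-Analysis.Analysis"
begin

(* Graph: vertex set V ('v set), edges E (2-element subsets of V).  An edge configuration x_e in chi^2 for e = {i,j}
   is a map assigning a label to each endpoint, i.e. an element of PiE e (\<lambda>_. X);
   (x_e)_i = x_e i.
   Dual variables lam e i x  (block lambda_{e,i} evaluated at label x). *)

type_synonym ('v,'x) dual = "'v set \<Rightarrow> 'v \<Rightarrow> 'x \<Rightarrow> real"

definition edge_configs :: "'x set \<Rightarrow> 'v set \<Rightarrow> ('v \<Rightarrow> 'x) set" where
  "edge_configs X e = PiE e (\<lambda>_. X)"

definition nbhd :: "'v set set \<Rightarrow> 'v \<Rightarrow> 'v set set" where
  "nbhd E i = {e \<in> E. i \<in> e}"

definition vexp :: "'v set set \<Rightarrow> ('v \<Rightarrow> 'x \<Rightarrow> real) \<Rightarrow> real \<Rightarrow> ('v,'x) dual \<Rightarrow> 'v \<Rightarrow> 'x \<Rightarrow> real" where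
  "vexp E Cv eta lam i x = exp (- eta * Cv i x + eta * (\<Sum>e\<in>nbhd E i. lam e i x))"

definition eexp :: "('v set \<Rightarrow> ('v \<Rightarrow> 'x) \<Rightarrow> real) \<Rightarrow> real \<Rightarrow> ('v,'x) dual \<Rightarrow> 'v set \<Rightarrow> ('v \<Rightarrow> 'x) \<Rightarrow> real" where
  "eexp Ce eta lam e xe = exp (- eta * Ce e xe - eta * (\<Sum>i\<in>e. lam e i (xe i)))"

definition Lfun :: "'v set \<Rightarrow> 'v set set \<Rightarrow> 'x set \<Rightarrow> ('v \<Rightarrow> 'x \<Rightarrow> real) \<Rightarrow>
    ('v set \<Rightarrow> ('v \<Rightarrow> 'x) \<Rightarrow> real) \<Rightarrow> real \<Rightarrow> ('v,'x) dual \<Rightarrow> real" where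
  "Lfun V E X Cv Ce eta lam =
     (1/eta) * (\<Sum>i\<in>V. ln (\<Sum>x\<in>X. vexp E Cv eta lam i x))
   + (1/eta) * (\<Sum>e\<in>E. ln (\<Sum>xe\<in>edge_configs X e. eexp Ce eta lam e xe))"

definition mu_v :: "'v set set \<Rightarrow> 'x set \<Rightarrow> ('v \<Rightarrow> 'x \<Rightarrow> real) \<Rightarrow> real \<Rightarrow> ('v,'x) dual \<Rightarrow> 'v \<Rightarrow> 'x \<Rightarrow> real" where
  "mu_v E X Cv eta lam i x = vexp E Cv eta lam i x / (\<Sum>y\<in>X. vexp E Cv eta lam i y)"

definition mu_e :: "'x set \<Rightarrow> ('v set \<Rightarrow> ('v \<Rightarrow> 'x) \<Rightarrow> real) \<Rightarrow> real \<Rightarrow> ('v,'x) dual \<Rightarrow> 'v set \<Rightarrow> ('v \<Rightarrow> 'x) \<Rightarrow> real" where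
  "mu_e X Ce eta lam e xe = eexp Ce eta lam e xe / (\<Sum>ye\<in>edge_configs X e. eexp Ce eta lam e ye)"

definition Smarg :: "'x set \<Rightarrow> ('v set \<Rightarrow> ('v \<Rightarrow> 'x) \<Rightarrow> real) \<Rightarrow> real \<Rightarrow> ('v,'x) dual \<Rightarrow> 'v set \<Rightarrow> 'v \<Rightarrow> 'x \<Rightarrow> real" where
  "Smarg X Ce eta lam e i x = (\<Sum>xe\<in>{xe \<in> edge_configs X e. xe i = x}. mu_e X Ce eta lam e xe)"

(* theta_seq k = theta_{k-1};  theta_seq 0 = theta_{-1} = 1 *)
fun theta_seq :: "nat \<Rightarrow> real" where
  "theta_seq 0 = 1"
| "theta_seq (Suc k) = (sqrt ((theta_seq k) ^ 4 + 4 * (theta_seq k) ^ 2) - (theta_seq k) ^ 2) / 2"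

definition accel_step :: "'v set set \<Rightarrow> 'x set \<Rightarrow> ('v \<Rightarrow> 'x \<Rightarrow> real) \<Rightarrow>
    ('v set \<Rightarrow> ('v \<Rightarrow> 'x) \<Rightarrow> real) \<Rightarrow> real \<Rightarrow> nat \<Rightarrow> ('v,'x) dual \<times> ('v,'x) dual \<Rightarrow>
    'v set \<times> 'v \<Rightarrow> ('v,'x) dual \<times> ('v,'x) dual" where
  "accel_step E X Cv Ce eta k st p =
    (let lam = fst st; v = snd st; th = theta_seq (Suc k);
         y = (\<lambda>e i x. th * v e i x + (1 - th) * lam e i x);
         ek = fst p; ik = snd p;
         lam' = (\<lambda>e i x. if e = ek \<and> i = ik
                  then y e i x + 1 / (2 * eta) *
                       ln (Smarg X Ce eta y e i x / mu_v E X Cv eta y i x)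
                  else y e i x);
         v' = (\<lambda>e i x. if e = ek \<and> i = ik
                  then v e i x + 1 / (4 * real (card E) * eta * th) *
                       (Smarg X Ce eta y e i x - mu_v E X Cv eta y i x)
                  else v e i x)
     in (lam', v'))"

fun accel_iter :: "'v set set \<Rightarrow> 'x set \<Rightarrow> ('v \<Rightarrow> 'x \<Rightarrow> real) \<Rightarrow>
    ('v set \<Rightarrow> ('v \<Rightarrow> 'x) \<Rightarrow> real) \<Rightarrow> real \<Rightarrow> (nat \<Rightarrow> 'v set \<times> 'v) \<Rightarrow> nat \<Rightarrow>
    ('v,'x) dual \<times> ('v,'x) dual" where
  "accel_iter E X Cv Ce eta s 0 = ((\<lambda>_ _ _. 0), (\<lambda>_ _ _. 0))"
| "accel_iter E X Cv Ce eta s (Suc k) =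
     accel_step E X Cv Ce eta k (accel_iter E X Cv Ce eta s k) (s k)"

definition pairs :: "'v set set \<Rightarrow> ('v set \<times> 'v) set" where
  "pairs E = {(e, i). e \<in> E \<and> i \<in> e}"

(* E[L(lambda^(k))]: lambda^(k) depends only on the first k i.i.d. uniform samples,
   so the expectation is the uniform average over all sample lists of length k *)
definition expected_L :: "'v set \<Rightarrow> 'v set set \<Rightarrow> 'x set \<Rightarrow> ('v \<Rightarrow> 'x \<Rightarrow> real) \<Rightarrow>
    ('v set \<Rightarrow> ('v \<Rightarrow> 'x) \<Rightarrow> real) \<Rightarrow> real \<Rightarrow> nat \<Rightarrow> real" where
  "expected_L V E X Cv Ce eta k =
     (\<Sum>xs\<in>{xs. set xs \<subseteq> pairs E \<and> length xs = k}.
        Lfun V E X Cv Ce eta (fst (accel_iter E X Cv Ce eta (\<lambda>j. xs ! j) k)))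
     / real (card (pairs E)) ^ k"

definition cost_norm :: "'v set \<Rightarrow> 'v set set \<Rightarrow> 'x set \<Rightarrow> ('v \<Rightarrow> 'x \<Rightarrow> real) \<Rightarrow>
    ('v set \<Rightarrow> ('v \<Rightarrow> 'x) \<Rightarrow> real) \<Rightarrow> real" where
  "cost_norm V E X Cv Ce =
     Max ({\<bar>Cv i x\<bar> | i x. i \<in> V \<and> x \<in> X} \<union>
          {\<bar>Ce e xe\<bar> | e xe. e \<in> E \<and> xe \<in> edge_configs X e})"

end

theory Submission
  imports Defs
begin


lemma jensen_exp:
  fixes p c :: "'a \<Rightarrow> real"
  assumes "finite A" "A \<noteq> {}" "\<And>x. x \<in> A \<Longrightarrow> p x \<ge> 0" "(\<Sum>x\<in>A. p x) = 1"
  shows "exp (\<Sum>x\<in>A. p x * c x) \<le> (\<Sum>x\<in>A. p x * exp (c x))"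
  using convex_on_sum[OF assms(1,2) exp_convex, of p c] assms by auto

lemma lse_ge_lin:
  fixes p a :: "'a \<Rightarrow> real"
  assumes "finite A" "A \<noteq> {}" "\<And>x. x \<in> A \<Longrightarrow> p x \<ge> 0" "(\<Sum>x\<in>A. p x) = 1"
  shows "(\<Sum>x\<in>A. p x * a x) \<le> ln (\<Sum>x\<in>A. exp (a x))"
proof -
  have p1: "p x \<le> 1" if "x \<in> A" for x
  proof -
    have "p x \<le> (\<Sum>x\<in>A. p x)" by (rule member_le_sum) (use assms that in auto)
    thus ?thesis using assms by simp
  qed
  have "exp (\<Sum>x\<in>A. p x * a x) \<le> (\<Sum>x\<in>A. p x * exp (a x))" by (rule jensen_exp[OF assms])
  also have "\<dots> \<le> (\<Sum>x\<in>A. exp (a x))"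
    by (rule sum_mono) (use p1 in \<open>auto intro: mult_left_le_one_le\<close>)
  finally have "exp (\<Sum>x\<in>A. p x * a x) \<le> (\<Sum>x\<in>A. exp (a x))" .
  moreover have "(\<Sum>x\<in>A. exp (a x)) > 0" using assms by (intro sum_pos) auto
  ultimately show ?thesis by (metis exp_le_cancel_iff exp_ln)
qed

lemma lse_conv:
  fixes a b :: "'a \<Rightarrow> real"
  assumes "finite A" "A \<noteq> {}"
  shows "ln (\<Sum>x\<in>A. exp (a x)) + (\<Sum>x\<in>A. exp (a x) / (\<Sum>y\<in>A. exp (a y)) * (b x - a x))
         \<le> ln (\<Sum>x\<in>A. exp (b x))"
proof -
  define Z where "Z = (\<Sum>y\<in>A. exp (a y))"
  have Z: "Z > 0" unfolding Z_def using assms by (intro sum_pos) auto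
  have SB: "(\<Sum>x\<in>A. exp (b x)) > 0" using assms by (intro sum_pos) auto
  have "exp (\<Sum>x\<in>A. exp (a x) / Z * (b x - a x)) \<le> (\<Sum>x\<in>A. exp (a x) / Z * exp (b x - a x))"
    by (rule jensen_exp) (use assms Z in \<open>auto simp: Z_def sum_divide_distrib[symmetric]\<close>)
  also have "\<dots> = (\<Sum>x\<in>A. exp (b x)) / Z"
    by (simp add: sum_divide_distrib exp_diff)
  finally have "(\<Sum>x\<in>A. exp (a x) / Z * (b x - a x)) \<le> ln ((\<Sum>x\<in>A. exp (b x)) / Z)"
    using Z SB by (subst ln_ge_iff) auto
  also have "\<dots> = ln (\<Sum>x\<in>A. exp (b x)) - ln Z"
    using Z SB by (rule_tac ln_divide_pos) auto
  finally show ?thesis by (simp add: Z_def)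
qed

locale emp =
  fixes V :: "'v set" and E :: "'v set set" and X :: "'x set"
    and Cv :: "'v \<Rightarrow> 'x \<Rightarrow> real" and Ce :: "'v set \<Rightarrow> ('v \<Rightarrow> 'x) \<Rightarrow> real" and eta :: real
  assumes finV: "finite V" and edgesV: "\<forall>e\<in>E. e \<subseteq> V \<and> card e = 2"
    and cover: "\<forall>i\<in>V. \<exists>e\<in>E. i \<in> e" and finX: "finite X" and d2: "card X \<ge> 2"
    and eta: "eta > 0"
begin

abbreviation "P \<equiv> pairs E"

lemma finE: "finite E"
  by (rule finite_subset[of _ "Pow V"]) (use finV edgesV in auto)

lemma e_sub: "e \<in> E \<Longrightarrow> e \<subseteq> V" using edgesV by auto
lemma e_fin: "e \<in> E \<Longrightarrow> finite e" using e_sub finV finite_subset by blast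
lemma e_card: "e \<in> E \<Longrightarrow> card e = 2" using edgesV by auto
lemma e_ne: "e \<in> E \<Longrightarrow> e \<noteq> {}" using e_card by fastforce
lemma X_ne: "X \<noteq> {}" using d2 by auto

lemma pairs_Sigma: "P = Sigma E (\<lambda>e. e)"
  unfolding pairs_def by auto

lemma finP: "finite P"
  unfolding pairs_Sigma using finE e_fin by (intro finite_SigmaI) auto

lemma cardP: "card P = 2 * card E"
  unfolding pairs_Sigma using finE e_fin e_card by (subst card_SigmaI) auto

lemma sumE_e: "(\<Sum>e\<in>E. \<Sum>i\<in>e. f e i) = (\<Sum>(e,i)\<in>P. f e i)"
  unfolding pairs_Sigma by (rule sum.Sigma) (use finE e_fin in auto)

lemma sumV_nbhd: "(\<Sum>i\<in>V. \<Sum>e\<in>nbhd E i. f e i) = (\<Sum>(e,i)\<in>P. f e i)"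
proof -
  have "(\<Sum>i\<in>V. \<Sum>e\<in>nbhd E i. f e i) = (\<Sum>i\<in>V. \<Sum>e\<in>{e\<in>E. i \<in> e}. f e i)"
    unfolding nbhd_def by simp
  also have "\<dots> = (\<Sum>e\<in>E. \<Sum>i\<in>{i\<in>V. i \<in> e}. f e i)"
    by (rule sum.swap_restrict) (use finV finE in auto)
  also have "\<dots> = (\<Sum>e\<in>E. \<Sum>i\<in>e. f e i)"
  proof (rule sum.cong[OF refl])
    fix e assume "e \<in> E"
    then have "{i\<in>V. i \<in> e} = e" using e_sub by auto
    then show "(\<Sum>i\<in>{i\<in>V. i \<in> e}. f e i) = (\<Sum>i\<in>e. f e i)" by simp
  qed
  finally show ?thesis using sumE_e by simp
qed

lemma fin_conf: "finite (edge_configs X e)" if "e \<in> E"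
  unfolding edge_configs_def using that e_fin finX by (intro finite_PiE) auto

lemma fiber_ne:
  assumes "i \<in> e" "x \<in> X" shows "\<exists>xe\<in>edge_configs X e. xe i = x"
proof
  show "(\<lambda>j. if j \<in> e then x else undefined) \<in> edge_configs X e"
    unfolding edge_configs_def PiE_def extensional_def using assms(2) by auto
  show "(\<lambda>j. if j \<in> e then x else undefined) i = x" using assms(1) by simp
qed

lemma conf_ne: "e \<in> E \<Longrightarrow> edge_configs X e \<noteq> {}"
proof -
  assume "e \<in> E"
  then obtain i where "i \<in> e" using e_ne by blast
  moreover obtain x where "x \<in> X" using X_ne by blast
  ultimately show ?thesis using fiber_ne by fastforce
qed

lemma conf_val: "xe \<in> edge_configs X e \<Longrightarrow> i \<in> e \<Longrightarrow> xe i \<in> X"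
  unfolding edge_configs_def by auto

lemma marg_sum:
  fixes f :: "('v \<Rightarrow> 'x) \<Rightarrow> real" and h :: "'x \<Rightarrow> real"
  assumes "e \<in> E" "i \<in> e"
  shows "(\<Sum>xe\<in>edge_configs X e. f xe * h (xe i)) =
         (\<Sum>x\<in>X. (\<Sum>xe\<in>{xe \<in> edge_configs X e. xe i = x}. f xe) * h x)"
proof -
  have "(\<Sum>x\<in>X. (\<Sum>xe\<in>{xe \<in> edge_configs X e. xe i = x}. f xe) * h x)
      = (\<Sum>x\<in>X. (\<Sum>xe\<in>{xe \<in> edge_configs X e. xe i = x}. f xe * h (xe i)))"
  proof (rule sum.cong[OF refl])
    fix x assume "x \<in> X"
    have "(\<Sum>xe\<in>{xe \<in> edge_configs X e. xe i = x}. f xe) * h x = (\<Sum>xe\<in>{xe \<in> edge_configs X e. xe i = x}. f xe * h x)"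
      by (rule sum_distrib_right)
    also have "\<dots> = (\<Sum>xe\<in>{xe \<in> edge_configs X e. xe i = x}. f xe * h (xe i))"
      by (rule sum.cong) auto
    finally show "(\<Sum>xe\<in>{xe \<in> edge_configs X e. xe i = x}. f xe) * h x = (\<Sum>xe\<in>{xe \<in> edge_configs X e. xe i = x}. f xe * h (xe i))" .
  qed
  also have "\<dots> = (\<Sum>xe\<in>edge_configs X e. f xe * h (xe i))"
    by (rule sum.group) (use assms fin_conf finX conf_val in auto)
  finally show ?thesis by simp
qed

lemma vexp_pos: "vexp E Cv eta lam i x > 0" by (simp add: vexp_def)
lemma eexp_pos: "eexp Ce eta lam e xe > 0" by (simp add: eexp_def)
lemma Zv_pos: "(\<Sum>y\<in>X. vexp E Cv eta lam i y) > 0"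
  using finX X_ne by (intro sum_pos) (auto simp: vexp_pos)
lemma Ze_pos: "e \<in> E \<Longrightarrow> (\<Sum>ye\<in>edge_configs X e. eexp Ce eta lam e ye) > 0"
  using fin_conf conf_ne by (intro sum_pos) (auto simp: eexp_pos)
lemma muv_pos: "mu_v E X Cv eta lam i x > 0"
  unfolding mu_v_def using Zv_pos vexp_pos by simp
lemma muv_sum: "(\<Sum>x\<in>X. mu_v E X Cv eta lam i x) = 1"
  unfolding mu_v_def using Zv_pos[of lam i] by (simp add: sum_divide_distrib[symmetric])
lemma mue_pos: "e \<in> E \<Longrightarrow> mu_e X Ce eta lam e xe > 0"
  unfolding mu_e_def using Ze_pos eexp_pos by simp
lemma mue_sum: "e \<in> E \<Longrightarrow> (\<Sum>xe\<in>edge_configs X e. mu_e X Ce eta lam e xe) = 1"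
  unfolding mu_e_def using Ze_pos[of e lam] by (simp add: sum_divide_distrib[symmetric])
lemma S_marg:
  assumes "e \<in> E" "i \<in> e"
  shows "(\<Sum>xe\<in>edge_configs X e. mu_e X Ce eta lam e xe * h (xe i)) = (\<Sum>x\<in>X. Smarg X Ce eta lam e i x * h x)"
  unfolding Smarg_def by (rule marg_sum[OF assms])
lemma S_sum: "e \<in> E \<Longrightarrow> i \<in> e \<Longrightarrow> (\<Sum>x\<in>X. Smarg X Ce eta lam e i x) = 1"
  using S_marg[of e i lam "\<lambda>_. 1"] mue_sum[of e lam] by simp
lemma S_pos:
  assumes "e \<in> E" "i \<in> e" "x \<in> X" shows "Smarg X Ce eta lam e i x > 0"
proof -
  obtain xe where xe: "xe \<in> edge_configs X e" "xe i = x" using fiber_ne[OF assms(2,3)] by blast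
  have fin: "finite {xe \<in> edge_configs X e. xe i = x}" using fin_conf[OF assms(1)] by simp
  have ne: "{xe \<in> edge_configs X e. xe i = x} \<noteq> {}" using xe by auto
  show ?thesis unfolding Smarg_def by (rule sum_pos[OF fin ne]) (simp add: mue_pos assms(1))
qed

definition gr where "gr lam e i x = mu_v E X Cv eta lam i x - Smarg X Ce eta lam e i x"
definition gpair where "gpair lam h = (\<Sum>(e,i)\<in>P. \<Sum>x\<in>X. gr lam e i x * h e i x)"

lemma lin_decomp:
  "(\<Sum>i\<in>V. \<Sum>x\<in>X. mu_v E X Cv eta lam i x * (\<Sum>e\<in>nbhd E i. h e i x))
   + (\<Sum>e\<in>E. \<Sum>xe\<in>edge_configs X e. mu_e X Ce eta lam e xe * (- (\<Sum>i\<in>e. h e i (xe i))))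
   = gpair lam h"
proof -
  have 1: "(\<Sum>i\<in>V. \<Sum>x\<in>X. mu_v E X Cv eta lam i x * (\<Sum>e\<in>nbhd E i. h e i x))
     = (\<Sum>(e,i)\<in>P. \<Sum>x\<in>X. mu_v E X Cv eta lam i x * h e i x)"
  proof -
    have "(\<Sum>i\<in>V. \<Sum>x\<in>X. mu_v E X Cv eta lam i x * (\<Sum>e\<in>nbhd E i. h e i x))
       = (\<Sum>i\<in>V. \<Sum>e\<in>nbhd E i. \<Sum>x\<in>X. mu_v E X Cv eta lam i x * h e i x)"
      by (simp add: sum_distrib_left, subst sum.swap, simp)
    then show ?thesis using sumV_nbhd by simp
  qed
  have 2: "(\<Sum>e\<in>E. \<Sum>xe\<in>edge_configs X e. mu_e X Ce eta lam e xe * (- (\<Sum>i\<in>e. h e i (xe i))))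
     = - (\<Sum>(e,i)\<in>P. \<Sum>x\<in>X. Smarg X Ce eta lam e i x * h e i x)"
  proof -
    have "(\<Sum>e\<in>E. \<Sum>xe\<in>edge_configs X e. mu_e X Ce eta lam e xe * (- (\<Sum>i\<in>e. h e i (xe i))))
       = - (\<Sum>e\<in>E. \<Sum>i\<in>e. \<Sum>xe\<in>edge_configs X e. mu_e X Ce eta lam e xe * h e i (xe i))"
      by (simp add: sum_distrib_left sum_negf, subst sum.swap, simp)
    also have "\<dots> = - (\<Sum>e\<in>E. \<Sum>i\<in>e. \<Sum>x\<in>X. Smarg X Ce eta lam e i x * h e i x)"
      using S_marg by (auto intro!: sum.cong)
    finally show ?thesis using sumE_e by simp
  qed
  have 3: "(\<Sum>(e,i)\<in>P. \<Sum>x\<in>X. gr lam e i x * h e i x) =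
     (\<Sum>p\<in>P. (\<lambda>(e,i). \<Sum>x\<in>X. mu_v E X Cv eta lam i x * h e i x) p
              - (\<lambda>(e,i). \<Sum>x\<in>X. Smarg X Ce eta lam e i x * h e i x) p)"
    by (rule sum.cong[OF refl]) (auto simp: gr_def left_diff_distrib sum_subtractf)
  show ?thesis unfolding 1 2 gpair_def 3 sum_subtractf by simp
qed

end



lemma pie_marg:
  fixes q :: "'v \<Rightarrow> 'x \<Rightarrow> real" and f :: "'x \<Rightarrow> real"
  assumes "finite e" "finite X" "i \<in> e" "\<forall>j\<in>e. (\<Sum>x\<in>X. q j x) = 1"
  shows "(\<Sum>g\<in>PiE e (\<lambda>_. X). (\<Prod>j\<in>e. q j (g j)) * f (g i)) = (\<Sum>x\<in>X. q i x * f x)"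
proof -
  define F where "F j y = q j y * (if j = i then f y else 1)" for j y
  have "(\<Prod>j\<in>e. \<Sum>y\<in>X. F j y) = (\<Sum>g\<in>PiE e (\<lambda>_. X). \<Prod>j\<in>e. F j (g j))"
    by (rule prod_sum_PiE) (use assms in auto)
  also have "(\<Prod>j\<in>e. \<Sum>y\<in>X. F j y) = (\<Prod>j\<in>e. if j = i then (\<Sum>y\<in>X. q i y * f y) else 1)"
    by (rule prod.cong) (use assms in \<open>auto simp: F_def\<close>)
  also have "\<dots> = (\<Sum>y\<in>X. q i y * f y)" using assms by (simp add: prod.delta)
  also have "(\<Sum>g\<in>PiE e (\<lambda>_. X). \<Prod>j\<in>e. F j (g j)) = (\<Sum>g\<in>PiE e (\<lambda>_. X). (\<Prod>j\<in>e. q j (g j)) * f (g i))"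
  proof (rule sum.cong[OF refl])
    fix g
    have "(\<Prod>j\<in>e. F j (g j)) = (\<Prod>j\<in>e. q j (g j)) * (\<Prod>j\<in>e. if j = i then f (g j) else 1)"
      unfolding F_def by (rule prod.distrib)
    also have "(\<Prod>j\<in>e. if j = i then f (g j) else 1) = f (g i)" using assms by (simp add: prod.delta)
    finally show "(\<Prod>j\<in>e. F j (g j)) = (\<Prod>j\<in>e. q j (g j)) * f (g i)" .
  qed
  finally show ?thesis by simp
qed

context emp begin

lemma v_conv:
  "(1/eta) * ln (\<Sum>x\<in>X. vexp E Cv eta lam i x)
   + (\<Sum>x\<in>X. mu_v E X Cv eta lam i x * (\<Sum>e\<in>nbhd E i. w e i x - lam e i x))
   \<le> (1/eta) * ln (\<Sum>x\<in>X. vexp E Cv eta w i x)"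
proof -
  define a where "a x = - eta * Cv i x + eta * (\<Sum>e\<in>nbhd E i. lam e i x)" for x
  define b where "b x = - eta * Cv i x + eta * (\<Sum>e\<in>nbhd E i. w e i x)" for x
  have va: "vexp E Cv eta lam i x = exp (a x)" for x unfolding vexp_def a_def ..
  have vb: "vexp E Cv eta w i x = exp (b x)" for x unfolding vexp_def b_def ..
  have ba: "b x - a x = eta * (\<Sum>e\<in>nbhd E i. w e i x - lam e i x)" for x
    unfolding a_def b_def by (simp add: sum_subtractf algebra_simps)
  have "ln (\<Sum>x\<in>X. exp (a x)) + (\<Sum>x\<in>X. exp (a x) / (\<Sum>y\<in>X. exp (a y)) * (b x - a x))
         \<le> ln (\<Sum>x\<in>X. exp (b x))" by (rule lse_conv[OF finX X_ne])
  also have "(\<Sum>x\<in>X. exp (a x) / (\<Sum>y\<in>X. exp (a y)) * (b x - a x))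
     = eta * (\<Sum>x\<in>X. mu_v E X Cv eta lam i x * (\<Sum>e\<in>nbhd E i. w e i x - lam e i x))"
    unfolding ba mu_v_def va sum_distrib_left by (intro sum.cong refl) (simp add: divide_inverse ac_simps)
  finally have 1: "ln (\<Sum>x\<in>X. vexp E Cv eta lam i x)
     + eta * (\<Sum>x\<in>X. mu_v E X Cv eta lam i x * (\<Sum>e\<in>nbhd E i. w e i x - lam e i x))
     \<le> ln (\<Sum>x\<in>X. vexp E Cv eta w i x)" unfolding va vb .
  have "(1/eta) * (ln (\<Sum>x\<in>X. vexp E Cv eta lam i x)
     + eta * (\<Sum>x\<in>X. mu_v E X Cv eta lam i x * (\<Sum>e\<in>nbhd E i. w e i x - lam e i x)))
     \<le> (1/eta) * ln (\<Sum>x\<in>X. vexp E Cv eta w i x)"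
    using 1 eta by (intro mult_left_mono) auto
  then show ?thesis using eta by (simp add: distrib_left)
qed

lemma e_conv:
  assumes "e \<in> E"
  shows "(1/eta) * ln (\<Sum>xe\<in>edge_configs X e. eexp Ce eta lam e xe)
   + (\<Sum>xe\<in>edge_configs X e. mu_e X Ce eta lam e xe * (- (\<Sum>i\<in>e. w e i (xe i) - lam e i (xe i))))
   \<le> (1/eta) * ln (\<Sum>xe\<in>edge_configs X e. eexp Ce eta w e xe)"
proof -
  define a where "a xe = - eta * Ce e xe - eta * (\<Sum>i\<in>e. lam e i (xe i))" for xe
  define b where "b xe = - eta * Ce e xe - eta * (\<Sum>i\<in>e. w e i (xe i))" for xe
  have va: "eexp Ce eta lam e xe = exp (a xe)" for xe unfolding eexp_def a_def ..
  have vb: "eexp Ce eta w e xe = exp (b xe)" for xe unfolding eexp_def b_def ..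
  have ba: "b xe - a xe = eta * (- (\<Sum>i\<in>e. w e i (xe i) - lam e i (xe i)))" for xe
    unfolding a_def b_def by (simp add: sum_subtractf algebra_simps)
  have "ln (\<Sum>xe\<in>edge_configs X e. exp (a xe)) + (\<Sum>xe\<in>edge_configs X e. exp (a xe) / (\<Sum>y\<in>edge_configs X e. exp (a y)) * (b xe - a xe))
         \<le> ln (\<Sum>xe\<in>edge_configs X e. exp (b xe))" by (rule lse_conv[OF fin_conf[OF assms] conf_ne[OF assms]])
  also have "(\<Sum>xe\<in>edge_configs X e. exp (a xe) / (\<Sum>y\<in>edge_configs X e. exp (a y)) * (b xe - a xe))
     = eta * (\<Sum>xe\<in>edge_configs X e. mu_e X Ce eta lam e xe * (- (\<Sum>i\<in>e. w e i (xe i) - lam e i (xe i))))"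
    unfolding ba mu_e_def va sum_distrib_left by (intro sum.cong refl) (simp add: divide_inverse ac_simps)
  finally have 1: "ln (\<Sum>xe\<in>edge_configs X e. eexp Ce eta lam e xe)
     + eta * (\<Sum>xe\<in>edge_configs X e. mu_e X Ce eta lam e xe * (- (\<Sum>i\<in>e. w e i (xe i) - lam e i (xe i))))
     \<le> ln (\<Sum>xe\<in>edge_configs X e. eexp Ce eta w e xe)" unfolding va vb .
  have "(1/eta) * (ln (\<Sum>xe\<in>edge_configs X e. eexp Ce eta lam e xe)
     + eta * (\<Sum>xe\<in>edge_configs X e. mu_e X Ce eta lam e xe * (- (\<Sum>i\<in>e. w e i (xe i) - lam e i (xe i)))))
     \<le> (1/eta) * ln (\<Sum>xe\<in>edge_configs X e. eexp Ce eta w e xe)"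
    using 1 eta by (intro mult_left_mono) auto
  then show ?thesis using eta by (simp add: distrib_left)
qed

lemma Lfun_conv:
  "Lfun V E X Cv Ce eta lam + gpair lam (\<lambda>e i x. w e i x - lam e i x) \<le> Lfun V E X Cv Ce eta w"
proof -
  have 1: "(\<Sum>i\<in>V. (1/eta) * ln (\<Sum>x\<in>X. vexp E Cv eta lam i x)
   + (\<Sum>x\<in>X. mu_v E X Cv eta lam i x * (\<Sum>e\<in>nbhd E i. w e i x - lam e i x)))
   \<le> (\<Sum>i\<in>V. (1/eta) * ln (\<Sum>x\<in>X. vexp E Cv eta w i x))"
    by (rule sum_mono) (rule v_conv)
  have 2: "(\<Sum>e\<in>E. (1/eta) * ln (\<Sum>xe\<in>edge_configs X e. eexp Ce eta lam e xe)
   + (\<Sum>xe\<in>edge_configs X e. mu_e X Ce eta lam e xe * (- (\<Sum>i\<in>e. w e i (xe i) - lam e i (xe i)))))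
   \<le> (\<Sum>e\<in>E. (1/eta) * ln (\<Sum>xe\<in>edge_configs X e. eexp Ce eta w e xe))"
    by (rule sum_mono) (rule e_conv)
  have 3: "gpair lam (\<lambda>e i x. w e i x - lam e i x) =
    (\<Sum>i\<in>V. \<Sum>x\<in>X. mu_v E X Cv eta lam i x * (\<Sum>e\<in>nbhd E i. w e i x - lam e i x))
   + (\<Sum>e\<in>E. \<Sum>xe\<in>edge_configs X e. mu_e X Ce eta lam e xe * (- (\<Sum>i\<in>e. w e i (xe i) - lam e i (xe i))))"
    using lin_decomp[of lam "\<lambda>e i x. w e i x - lam e i x"] by simp
  show ?thesis using 1 2 unfolding Lfun_def 3 sum.distrib sum_distrib_left[symmetric] by linarith
qed

lemma gpair_lin:
  "gpair lam (\<lambda>e i x. a * h1 e i x + b * h2 e i x) = a * gpair lam h1 + b * gpair lam h2"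
proof -
  have "gpair lam (\<lambda>e i x. a * h1 e i x + b * h2 e i x) =
    (\<Sum>p\<in>P. a * (\<lambda>(e,i). \<Sum>x\<in>X. gr lam e i x * h1 e i x) p + b * (\<lambda>(e,i). \<Sum>x\<in>X. gr lam e i x * h2 e i x) p)"
    unfolding gpair_def
    by (rule sum.cong[OF refl]) (auto simp: algebra_simps sum.distrib sum_distrib_left)
  then show ?thesis unfolding gpair_def by (simp add: sum.distrib sum_distrib_left)
qed

lemma gauge:
  "Lfun V E X Cv Ce eta (\<lambda>e i x. lam e i x - c e i) = Lfun V E X Cv Ce eta lam"
proof -
  have v: "(1/eta) * ln (\<Sum>x\<in>X. vexp E Cv eta (\<lambda>e i x. lam e i x - c e i) i x)
     = (1/eta) * ln (\<Sum>x\<in>X. vexp E Cv eta lam i x) - (\<Sum>e\<in>nbhd E i. c e i)" for i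
  proof -
    have "vexp E Cv eta (\<lambda>e i x. lam e i x - c e i) i x = vexp E Cv eta lam i x * exp (- eta * (\<Sum>e\<in>nbhd E i. c e i))" for x
      unfolding vexp_def by (simp add: sum_subtractf algebra_simps flip: exp_add)
    then have "(\<Sum>x\<in>X. vexp E Cv eta (\<lambda>e i x. lam e i x - c e i) i x) = (\<Sum>x\<in>X. vexp E Cv eta lam i x) * exp (- eta * (\<Sum>e\<in>nbhd E i. c e i))"
      by (simp add: sum_distrib_right)
    then have "ln (\<Sum>x\<in>X. vexp E Cv eta (\<lambda>e i x. lam e i x - c e i) i x) = ln (\<Sum>x\<in>X. vexp E Cv eta lam i x) - eta * (\<Sum>e\<in>nbhd E i. c e i)"
      using Zv_pos[of lam i] by (simp add: ln_mult)
    then show ?thesis using eta by (simp add: field_simps)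
  qed
  have ed: "(1/eta) * ln (\<Sum>xe\<in>edge_configs X e. eexp Ce eta (\<lambda>e i x. lam e i x - c e i) e xe)
     = (1/eta) * ln (\<Sum>xe\<in>edge_configs X e. eexp Ce eta lam e xe) + (\<Sum>i\<in>e. c e i)" if "e \<in> E" for e
  proof -
    have "eexp Ce eta (\<lambda>e i x. lam e i x - c e i) e xe = eexp Ce eta lam e xe * exp (eta * (\<Sum>i\<in>e. c e i))" for xe
      unfolding eexp_def by (simp add: sum_subtractf algebra_simps flip: exp_add)
    then have "(\<Sum>xe\<in>edge_configs X e. eexp Ce eta (\<lambda>e i x. lam e i x - c e i) e xe) = (\<Sum>xe\<in>edge_configs X e. eexp Ce eta lam e xe) * exp (eta * (\<Sum>i\<in>e. c e i))"
      by (simp add: sum_distrib_right)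
    then have "ln (\<Sum>xe\<in>edge_configs X e. eexp Ce eta (\<lambda>e i x. lam e i x - c e i) e xe) = ln (\<Sum>xe\<in>edge_configs X e. eexp Ce eta lam e xe) + eta * (\<Sum>i\<in>e. c e i)"
      using Ze_pos[OF that, of lam] by (simp add: ln_mult)
    then show ?thesis using eta by (simp add: field_simps)
  qed
  have "Lfun V E X Cv Ce eta (\<lambda>e i x. lam e i x - c e i) =
     (\<Sum>i\<in>V. (1/eta) * ln (\<Sum>x\<in>X. vexp E Cv eta lam i x) - (\<Sum>e\<in>nbhd E i. c e i))
   + (\<Sum>e\<in>E. (1/eta) * ln (\<Sum>xe\<in>edge_configs X e. eexp Ce eta lam e xe) + (\<Sum>i\<in>e. c e i))"
    unfolding Lfun_def sum_distrib_left using v ed by simp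
  also have "\<dots> = Lfun V E X Cv Ce eta lam"
    unfolding Lfun_def sum_distrib_left sum.distrib sum_subtractf sumE_e sumV_nbhd by simp
  finally show ?thesis .
qed

abbreviation "Cn \<equiv> cost_norm V E X Cv Ce"

lemma Cv_le: "i \<in> V \<Longrightarrow> x \<in> X \<Longrightarrow> \<bar>Cv i x\<bar> \<le> Cn"
proof -
  assume a: "i \<in> V" "x \<in> X"
  have f1: "finite {\<bar>Cv i x\<bar> | i x. i \<in> V \<and> x \<in> X}"
  proof -
    have "{\<bar>Cv i x\<bar> | i x. i \<in> V \<and> x \<in> X} = (\<lambda>(i,x). \<bar>Cv i x\<bar>) ` (V \<times> X)" by auto
    then show ?thesis using finV finX by simp
  qed
  have f2: "finite {\<bar>Ce e xe\<bar> | e xe. e \<in> E \<and> xe \<in> edge_configs X e}"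
  proof -
    have "{\<bar>Ce e xe\<bar> | e xe. e \<in> E \<and> xe \<in> edge_configs X e} = (\<lambda>(e,xe). \<bar>Ce e xe\<bar>) ` (Sigma E (edge_configs X))" by auto
    then show ?thesis using finE fin_conf by simp
  qed
  show ?thesis unfolding cost_norm_def by (rule Max_ge) (use f1 f2 a in auto)
qed

lemma Ce_le: "e \<in> E \<Longrightarrow> xe \<in> edge_configs X e \<Longrightarrow> \<bar>Ce e xe\<bar> \<le> Cn"
proof -
  assume a: "e \<in> E" "xe \<in> edge_configs X e"
  have f1: "finite {\<bar>Cv i x\<bar> | i x. i \<in> V \<and> x \<in> X}"
  proof -
    have "{\<bar>Cv i x\<bar> | i x. i \<in> V \<and> x \<in> X} = (\<lambda>(i,x). \<bar>Cv i x\<bar>) ` (V \<times> X)" by auto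
    then show ?thesis using finV finX by simp
  qed
  have f2: "finite {\<bar>Ce e xe\<bar> | e xe. e \<in> E \<and> xe \<in> edge_configs X e}"
  proof -
    have "{\<bar>Ce e xe\<bar> | e xe. e \<in> E \<and> xe \<in> edge_configs X e} = (\<lambda>(e,xe). \<bar>Ce e xe\<bar>) ` (Sigma E (edge_configs X))" by auto
    then show ?thesis using finE fin_conf by simp
  qed
  show ?thesis unfolding cost_norm_def by (rule Max_ge) (use f1 f2 a in auto)
qed

lemma card_conf: "e \<in> E \<Longrightarrow> card (edge_configs X e) = card X ^ 2"
  unfolding edge_configs_def using e_fin e_card by (simp add: card_PiE)

lemma L0_upper:
  "Lfun V E X Cv Ce eta (\<lambda>_ _ _. 0) \<le> real (card V) * (Cn + ln (card X) / eta) + real (card E) * (Cn + 2 * ln (card X) / eta)"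
proof -
  have dpos: "real (card X) > 0" using d2 by simp
  have v: "(1/eta) * ln (\<Sum>x\<in>X. vexp E Cv eta (\<lambda>_ _ _. 0) i x) \<le> Cn + ln (card X) / eta" if "i \<in> V" for i
  proof -
    have "(\<Sum>x\<in>X. vexp E Cv eta (\<lambda>_ _ _. 0) i x) \<le> (\<Sum>x\<in>X. exp (eta * Cn))"
    proof (rule sum_mono)
      fix x assume "x \<in> X"
      then have "- Cv i x \<le> Cn" using Cv_le[OF that, of x] by (auto simp: abs_le_iff)
      then have "eta * (- Cv i x) \<le> eta * Cn" using eta by (intro mult_left_mono) auto
      then have "- eta * Cv i x \<le> eta * Cn" by simp
      then show "vexp E Cv eta (\<lambda>_ _ _. 0) i x \<le> exp (eta * Cn)" unfolding vexp_def by simp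
    qed
    also have "\<dots> = card X * exp (eta * Cn)" by simp
    finally have "ln (\<Sum>x\<in>X. vexp E Cv eta (\<lambda>_ _ _. 0) i x) \<le> ln (card X * exp (eta * Cn))"
      by (rule ln_mono) (rule Zv_pos)
    also have "\<dots> = ln (card X) + eta * Cn" using dpos by (simp add: ln_mult)
    finally show ?thesis using eta by (simp add: field_simps)
  qed
  have ed: "(1/eta) * ln (\<Sum>xe\<in>edge_configs X e. eexp Ce eta (\<lambda>_ _ _. 0) e xe) \<le> Cn + 2 * ln (card X) / eta" if "e \<in> E" for e
  proof -
    have "(\<Sum>xe\<in>edge_configs X e. eexp Ce eta (\<lambda>_ _ _. 0) e xe) \<le> (\<Sum>xe\<in>edge_configs X e. exp (eta * Cn))"
    proof (rule sum_mono)
      fix xe assume "xe \<in> edge_configs X e"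
      then have "- Ce e xe \<le> Cn" using Ce_le[OF that, of xe] by (auto simp: abs_le_iff)
      then have "eta * (- Ce e xe) \<le> eta * Cn" using eta by (intro mult_left_mono) auto
      then have "- eta * Ce e xe \<le> eta * Cn" by simp
      then show "eexp Ce eta (\<lambda>_ _ _. 0) e xe \<le> exp (eta * Cn)" unfolding eexp_def by simp
    qed
    also have "\<dots> = card X ^ 2 * exp (eta * Cn)" using card_conf[OF that] by simp
    finally have "ln (\<Sum>xe\<in>edge_configs X e. eexp Ce eta (\<lambda>_ _ _. 0) e xe) \<le> ln (card X ^ 2 * exp (eta * Cn))"
      by (rule ln_mono) (rule Ze_pos[OF that])
    also have "\<dots> = 2 * ln (card X) + eta * Cn" using dpos by (simp add: ln_mult ln_realpow)
    finally show ?thesis using eta by (simp add: field_simps)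
  qed
  have "Lfun V E X Cv Ce eta (\<lambda>_ _ _. 0) \<le> (\<Sum>i\<in>V. Cn + ln (card X) / eta) + (\<Sum>e\<in>E. Cn + 2 * ln (card X) / eta)"
    unfolding Lfun_def sum_distrib_left using v ed by (intro add_mono sum_mono) auto
  then show ?thesis by simp
qed

end



lemma hell_pt:
  fixes mu S t :: real
  assumes "0 < mu" "mu \<le> 1" "0 < S" "S \<le> 1" "0 < t" "t^2 = S / mu"
  shows "(mu - S)^2 \<le> 4 * mu * (1 - t)^2"
proof -
  have S: "S = mu * t^2" using assms by (simp add: field_simps)
  have "(mu * t)^2 = mu * S" using S by (simp add: power2_eq_square)
  also have "\<dots> \<le> 1" using assms by (simp add: mult_le_one)
  finally have sq: "(mu * t)^2 \<le> 1" .
  have mt: "mu * t \<le> 1"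
  proof (rule ccontr)
    assume "\<not> mu * t \<le> 1"
    then have "1 < mu * t" by simp
    then have "1 < (mu * t)^2" by (rule one_less_power) simp
    with sq show False by simp
  qed
  have "mu * (1 + t)^2 = mu + 2 * (mu * t) + S" using S by (simp add: power2_eq_square algebra_simps)
  also have "\<dots> \<le> 4" using mt assms by linarith
  finally have a: "mu * (1 + t)^2 \<le> 4" .
  have "(mu - S)^2 = mu * (1 - t)^2 * (mu * (1 + t)^2)" using S by (simp add: power2_eq_square algebra_simps)
  also have "\<dots> \<le> mu * (1 - t)^2 * 4" using a assms by (intro mult_left_mono) auto
  finally show ?thesis by (simp add: algebra_simps)
qed

context emp begin

lemma L_lower:
  assumes u0: "\<forall>(e,i)\<in>P. (\<Sum>x\<in>X. u e i x) = 0" and M: "M > 0"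
    and uM: "\<forall>(e,i)\<in>P. \<forall>x\<in>X. \<bar>u e i x\<bar> \<le> M"
  shows "- (real (card V) + real (card E)) * Cn + (\<Sum>(e,i)\<in>P. \<Sum>x\<in>X. (u e i x)^2) / (2 * real (card X) * M)
     \<le> Lfun V E X Cv Ce eta u"
proof -
  define d where "d = real (card X)"
  have dpos: "d > 0" using d2 unfolding d_def by simp
  have v: "- Cn \<le> (1/eta) * ln (\<Sum>x\<in>X. vexp E Cv eta u i x)" if iV: "i \<in> V" for i
  proof -
    define a where "a x = - eta * Cv i x + eta * (\<Sum>e\<in>nbhd E i. u e i x)" for x
    have va: "vexp E Cv eta u i x = exp (a x)" for x unfolding vexp_def a_def ..
    have F1: "(\<Sum>x\<in>X. 1/d * a x) \<le> ln (\<Sum>x\<in>X. exp (a x))"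
      by (rule lse_ge_lin[OF finX X_ne]) (use dpos in \<open>auto simp: d_def\<close>)
    have F2: "(\<Sum>x\<in>X. \<Sum>e\<in>nbhd E i. u e i x) = 0"
    proof -
      have "(\<Sum>x\<in>X. \<Sum>e\<in>nbhd E i. u e i x) = (\<Sum>e\<in>nbhd E i. \<Sum>x\<in>X. u e i x)" by (rule sum.swap)
      also have "\<dots> = 0" using u0 by (intro sum.neutral) (auto simp: nbhd_def pairs_def)
      finally show ?thesis .
    qed
    have F3: "(\<Sum>x\<in>X. 1/d * a x) = 1/d * (\<Sum>x\<in>X. - eta * Cv i x) + eta / d * (\<Sum>x\<in>X. \<Sum>e\<in>nbhd E i. u e i x)"
    proof -
      have 1: "(\<Sum>x\<in>X. a x) = (\<Sum>x\<in>X. - eta * Cv i x) + eta * (\<Sum>x\<in>X. \<Sum>e\<in>nbhd E i. u e i x)"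
        unfolding a_def by (simp only: sum.distrib sum_distrib_left)
      have "(\<Sum>x\<in>X. 1/d * a x) = 1/d * (\<Sum>x\<in>X. a x)" by (rule sum_distrib_left[symmetric])
      then show ?thesis unfolding 1 by (simp add: algebra_simps)
    qed
    have F4: "(\<Sum>x\<in>X. - eta * Cv i x) \<ge> (\<Sum>x\<in>X. - eta * Cn)"
    proof (rule sum_mono)
      fix x assume "x \<in> X"
      then have "Cv i x \<le> Cn" using Cv_le[OF iV] by (auto simp: abs_le_iff)
      then show "- eta * Cn \<le> - eta * Cv i x" using eta by simp
    qed
    have "1/d * (\<Sum>x\<in>X. - eta * Cn) \<le> 1/d * (\<Sum>x\<in>X. - eta * Cv i x)"
      using F4 dpos by (intro mult_left_mono) auto
    also have "\<dots> \<le> ln (\<Sum>x\<in>X. exp (a x))" using F1 F2 F3 by simp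
    also have "(\<Sum>x\<in>X. - eta * Cn) = d * (- eta * Cn)" by (simp add: d_def)
    finally have "1/d * (d * (- eta * Cn)) \<le> ln (\<Sum>x\<in>X. exp (a x))" .
    then have "- eta * Cn \<le> ln (\<Sum>x\<in>X. vexp E Cv eta u i x)" using dpos by (simp add: va)
    then show ?thesis using eta by (simp add: field_simps)
  qed
  define Q where "Q e = (\<Sum>i\<in>e. \<Sum>x\<in>X. (u e i x)^2) / (2 * d * M)" for e
  have ed: "- Cn + Q e \<le> (1/eta) * ln (\<Sum>xe\<in>edge_configs X e. eexp Ce eta u e xe)" if eE: "e \<in> E" for e
  proof -
    define q where "q j x = 1/d * (1 - u e j x / (2 * M))" for j x
    define p where "p xe = (\<Prod>j\<in>e. q j (xe j))" for xe
    define a where "a xe = - eta * Ce e xe - eta * (\<Sum>i\<in>e. u e i (xe i))" for xe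
    have va: "eexp Ce eta u e xe = exp (a xe)" for xe unfolding eexp_def a_def ..
    have qpos: "q j x \<ge> 0" if "j \<in> e" "x \<in> X" for j x
    proof -
      have "\<bar>u e j x\<bar> \<le> M" using uM that eE by (auto simp: pairs_def)
      then have "u e j x / (2 * M) \<le> 1" using M by (auto simp: abs_le_iff field_simps)
      then show ?thesis unfolding q_def using dpos by simp
    qed
    have qsum: "\<forall>j\<in>e. (\<Sum>x\<in>X. q j x) = 1"
    proof
      fix j assume j: "j \<in> e"
      have "(\<Sum>x\<in>X. u e j x) = 0" using u0 j eE by (auto simp: pairs_def)
      have "(\<Sum>x\<in>X. q j x) = (\<Sum>x\<in>X. 1/d - u e j x / (2 * d * M))"
        unfolding q_def using dpos M by (intro sum.cong refl) (simp add: field_simps)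
      also have "\<dots> = (\<Sum>x\<in>X. 1/d) - (\<Sum>x\<in>X. u e j x) / (2 * d * M)"
        by (simp only: sum_subtractf sum_divide_distrib)
      also have "\<dots> = 1" using \<open>(\<Sum>x\<in>X. u e j x) = 0\<close> dpos by (simp add: d_def)
      finally show "(\<Sum>x\<in>X. q j x) = 1" .
    qed
    have marg: "(\<Sum>xe\<in>edge_configs X e. p xe * f (xe j)) = (\<Sum>x\<in>X. q j x * f x)" if "j \<in> e" for f j
      unfolding p_def edge_configs_def by (rule pie_marg[OF e_fin[OF eE] finX that qsum])
    have psum: "(\<Sum>xe\<in>edge_configs X e. p xe) = 1"
    proof -
      obtain j where "j \<in> e" using e_ne[OF eE] by blast
      from marg[OF this, of "\<lambda>_. 1"] qsum \<open>j \<in> e\<close> show ?thesis by simp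
    qed
    have ppos: "p xe \<ge> 0" if "xe \<in> edge_configs X e" for xe
      unfolding p_def by (rule prod_nonneg) (metis qpos conf_val that)
    have "(\<Sum>xe\<in>edge_configs X e. p xe * a xe) \<le> ln (\<Sum>xe\<in>edge_configs X e. exp (a xe))"
      by (rule lse_ge_lin[OF fin_conf[OF eE] conf_ne[OF eE]]) (use ppos psum in auto)
    moreover have "(\<Sum>xe\<in>edge_configs X e. p xe * a xe) =
        (\<Sum>xe\<in>edge_configs X e. p xe * (- eta * Ce e xe)) - eta * (\<Sum>i\<in>e. \<Sum>xe\<in>edge_configs X e. p xe * u e i (xe i))"
    proof -
      have "(\<Sum>xe\<in>edge_configs X e. p xe * a xe) =
        (\<Sum>xe\<in>edge_configs X e. p xe * (- eta * Ce e xe)) - eta * (\<Sum>xe\<in>edge_configs X e. \<Sum>i\<in>e. p xe * u e i (xe i))"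
        unfolding a_def by (simp add: algebra_simps sum_subtractf sum_distrib_left)
      also have "(\<Sum>xe\<in>edge_configs X e. \<Sum>i\<in>e. p xe * u e i (xe i)) = (\<Sum>i\<in>e. \<Sum>xe\<in>edge_configs X e. p xe * u e i (xe i))"
        by (rule sum.swap)
      finally show ?thesis .
    qed
    moreover have "(\<Sum>xe\<in>edge_configs X e. p xe * (- eta * Ce e xe)) \<ge> (\<Sum>xe\<in>edge_configs X e. p xe * (- eta * Cn))"
    proof (rule sum_mono)
      fix xe assume xe: "xe \<in> edge_configs X e"
      then have "Ce e xe \<le> Cn" using Ce_le[OF eE] by (auto simp: abs_le_iff)
      then have "- eta * Cn \<le> - eta * Ce e xe" using eta by simp
      then show "p xe * (- eta * Cn) \<le> p xe * (- eta * Ce e xe)" using ppos[OF xe] by (rule mult_left_mono)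
    qed
    moreover have "(\<Sum>xe\<in>edge_configs X e. p xe * (- eta * Cn)) = - eta * Cn"
      unfolding sum_distrib_right[symmetric] psum by simp
    moreover have QQ: "(\<Sum>i\<in>e. \<Sum>xe\<in>edge_configs X e. p xe * u e i (xe i)) = - Q e"
    proof -
      have "(\<Sum>xe\<in>edge_configs X e. p xe * u e i (xe i)) = - (\<Sum>x\<in>X. (u e i x)^2) / (2 * d * M)" if i: "i \<in> e" for i
      proof -
        have "(\<Sum>xe\<in>edge_configs X e. p xe * u e i (xe i)) = (\<Sum>x\<in>X. q i x * u e i x)" by (rule marg[OF i])
        also have "\<dots> = (\<Sum>x\<in>X. 1/d * u e i x - (u e i x)^2 / (2 * d * M))"
          unfolding q_def using dpos M by (intro sum.cong refl) (simp add: field_simps power2_eq_square)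
        also have "\<dots> = 1/d * (\<Sum>x\<in>X. u e i x) - (\<Sum>x\<in>X. (u e i x)^2) / (2 * d * M)"
          by (simp only: sum_subtractf sum_divide_distrib sum_distrib_left)
        also have "(\<Sum>x\<in>X. u e i x) = 0" using u0 i eE by (auto simp: pairs_def)
        finally show ?thesis by simp
      qed
      then have "(\<Sum>i\<in>e. \<Sum>xe\<in>edge_configs X e. p xe * u e i (xe i)) = (\<Sum>i\<in>e. - (\<Sum>x\<in>X. (u e i x)^2) / (2 * d * M))"
        by (rule sum.cong[OF refl])
      then show ?thesis unfolding Q_def by (simp add: sum_divide_distrib sum_negf)
    qed
    moreover have "eta * (\<Sum>i\<in>e. \<Sum>xe\<in>edge_configs X e. p xe * u e i (xe i)) = - (eta * Q e)"
      unfolding QQ by simp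
    ultimately have "- eta * Cn + eta * Q e \<le> ln (\<Sum>xe\<in>edge_configs X e. exp (a xe))"
      by linarith
    then have "- eta * Cn + eta * Q e \<le> ln (\<Sum>xe\<in>edge_configs X e. eexp Ce eta u e xe)"
      by (simp add: va)
    then show ?thesis using eta by (simp add: field_simps)
  qed
  have "(\<Sum>i\<in>V. - Cn) + (\<Sum>e\<in>E. - Cn + Q e) \<le> Lfun V E X Cv Ce eta u"
    unfolding Lfun_def sum_distrib_left using v ed by (intro add_mono sum_mono) auto
  moreover have "(\<Sum>e\<in>E. Q e) = (\<Sum>(e,i)\<in>P. \<Sum>x\<in>X. (u e i x)^2) / (2 * real (card X) * M)"
    unfolding Q_def d_def sum_divide_distrib[symmetric] sumE_e ..
  moreover have "(\<Sum>e\<in>E. - Cn + Q e) = (\<Sum>e\<in>E. Q e) - real (card E) * Cn"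
    by (simp add: sum.distrib sum_subtractf)
  moreover have "(\<Sum>i\<in>V. - Cn) = - real (card V) * Cn" by simp
  ultimately show ?thesis by (simp add: algebra_simps)
qed

end


context emp begin

lemma le1_of_sum:
  fixes f :: "'a \<Rightarrow> real"
  assumes "finite A" "\<And>x. x \<in> A \<Longrightarrow> f x > 0" "sum f A = 1" "x \<in> A"
  shows "f x \<le> 1"
proof -
  have "f x \<le> sum f A" by (rule member_le_sum) (use assms in \<open>auto intro: less_imp_le\<close>)
  then show ?thesis using assms by simp
qed

lemma block_step:
  assumes b: "(e0, i0) \<in> P"
    and lam': "lam' = (\<lambda>e i x. if e = e0 \<and> i = i0 then y e i x + 1 / (2 * eta) *
                       ln (Smarg X Ce eta y e i x / mu_v E X Cv eta y i x) else y e i x)"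
  shows "Lfun V E X Cv Ce eta lam' \<le> Lfun V E X Cv Ce eta y - 1/(4*eta) * (\<Sum>x\<in>X. (gr y e0 i0 x)^2)"
proof -
  have e0: "e0 \<in> E" and i0: "i0 \<in> e0" using b by (auto simp: pairs_def)
  have i0V: "i0 \<in> V" using e_sub[OF e0] i0 by auto
  define mu where "mu x = mu_v E X Cv eta y i0 x" for x
  define Sx where "Sx x = Smarg X Ce eta y e0 i0 x" for x
  define del where "del x = 1 / (2 * eta) * ln (Sx x / mu x)" for x
  define t where "t x = exp (eta * del x)" for x
  define B where "B = (\<Sum>x\<in>X. mu x * t x)"
  have mupos: "mu x > 0" for x unfolding mu_def by (rule muv_pos)
  have Spos: "x \<in> X \<Longrightarrow> Sx x > 0" for x unfolding Sx_def by (rule S_pos[OF e0 i0])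
  have tpos: "t x > 0" for x unfolding t_def by simp
  have t2: "(t x)^2 = Sx x / mu x" if "x \<in> X" for x
  proof -
    have "(t x)^2 = exp (2 * (eta * del x))" unfolding t_def by (simp add: exp_double[symmetric] power2_eq_square mult_exp_exp)
    also have "2 * (eta * del x) = ln (Sx x / mu x)" unfolding del_def using eta by simp
    also have "exp (ln (Sx x / mu x)) = Sx x / mu x" using Spos[OF that] mupos by simp
    finally show ?thesis .
  qed
  have Smt: "Sx x * (1 / t x) = mu x * t x" if "x \<in> X" for x
  proof -
    have "Sx x = mu x * (t x)^2" using t2[OF that] mupos[of x] by (simp add: field_simps)
    then show ?thesis using tpos by (simp add: power2_eq_square field_simps)
  qed
  have lam'2: "lam' e i x = y e i x + (if e = e0 \<and> i = i0 then del x else 0)" for e i x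
    unfolding lam' del_def Sx_def mu_def by auto
  have vsum: "(\<Sum>e\<in>nbhd E i. lam' e i x) = (\<Sum>e\<in>nbhd E i. y e i x) + (if i = i0 then del x else 0)" for i x
  proof -
    have "(\<Sum>e\<in>nbhd E i. lam' e i x) = (\<Sum>e\<in>nbhd E i. y e i x) + (\<Sum>e\<in>nbhd E i. if e = e0 \<and> i = i0 then del x else 0)"
      unfolding lam'2 by (simp add: sum.distrib)
    also have "(\<Sum>e\<in>nbhd E i. if e = e0 \<and> i = i0 then del x else 0) = (if i = i0 then del x else 0)"
    proof (cases "i = i0")
      case True
      have "e0 \<in> nbhd E i0" using e0 i0 by (simp add: nbhd_def)
      moreover have "finite (nbhd E i0)" using finE by (simp add: nbhd_def)
      ultimately show ?thesis using True by (simp add: sum.delta)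
    qed simp
    finally show ?thesis .
  qed
  have vexp': "vexp E Cv eta lam' i x = vexp E Cv eta y i x * (if i = i0 then t x else 1)" for i x
    unfolding vexp_def vsum t_def by (auto simp: distrib_left mult_exp_exp algebra_simps)
  have Zv: "(\<Sum>x\<in>X. vexp E Cv eta y i x) > 0" for i by (rule Zv_pos)
  have vln: "ln (\<Sum>x\<in>X. vexp E Cv eta lam' i x) = ln (\<Sum>x\<in>X. vexp E Cv eta y i x) + (if i = i0 then ln B else 0)" for i
  proof (cases "i = i0")
    case True
    have "(\<Sum>x\<in>X. vexp E Cv eta lam' i x) = (\<Sum>x\<in>X. vexp E Cv eta y i0 x * t x)"
      unfolding vexp' True by simp
    also have "\<dots> = (\<Sum>x\<in>X. vexp E Cv eta y i0 x) * B"
      unfolding B_def sum_distrib_left mu_def mu_v_def using Zv[of i0]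
      by (intro sum.cong refl) (simp add: field_simps)
    finally have "(\<Sum>x\<in>X. vexp E Cv eta lam' i x) = (\<Sum>x\<in>X. vexp E Cv eta y i0 x) * B" .
    moreover have "B > 0" unfolding B_def using finX X_ne mupos tpos by (intro sum_pos) auto
    ultimately show ?thesis using True Zv[of i0] by (simp add: ln_mult)
  qed (simp add: vexp')
  have esum: "(\<Sum>i\<in>e. lam' e i (xe i)) = (\<Sum>i\<in>e. y e i (xe i)) + (if e = e0 then del (xe i0) else 0)" if eE: "e \<in> E" for e xe
  proof -
    have "(\<Sum>i\<in>e. lam' e i (xe i)) = (\<Sum>i\<in>e. y e i (xe i)) + (\<Sum>i\<in>e. if e = e0 \<and> i = i0 then del (xe i) else 0)"
      unfolding lam'2 by (simp add: sum.distrib)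
    also have "(\<Sum>i\<in>e. if e = e0 \<and> i = i0 then del (xe i) else 0) = (if e = e0 then del (xe i0) else 0)"
    proof (cases "e = e0")
      case True
      then show ?thesis using i0 e_fin[OF e0] by (simp add: sum.delta)
    qed simp
    finally show ?thesis .
  qed
  have eexp': "eexp Ce eta lam' e xe = eexp Ce eta y e xe * (if e = e0 then 1 / t (xe i0) else 1)" if "e \<in> E" for e xe
  proof -
    have inv: "1 / exp z = exp (- z)" for z :: real by (simp add: exp_minus field_simps)
    show ?thesis unfolding eexp_def esum[OF that] t_def inv
      by (auto simp: right_diff_distrib distrib_left mult_exp_exp algebra_simps)
  qed
  have eln: "ln (\<Sum>xe\<in>edge_configs X e. eexp Ce eta lam' e xe) = ln (\<Sum>xe\<in>edge_configs X e. eexp Ce eta y e xe) + (if e = e0 then ln B else 0)"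
    if eE: "e \<in> E" for e
  proof (cases "e = e0")
    case True
    have Ze: "(\<Sum>xe\<in>edge_configs X e0. eexp Ce eta y e0 xe) > 0" by (rule Ze_pos[OF e0])
    have "(\<Sum>xe\<in>edge_configs X e. eexp Ce eta lam' e xe) = (\<Sum>xe\<in>edge_configs X e0. eexp Ce eta y e0 xe * (1 / t (xe i0)))"
      using eexp'[OF eE] True by simp
    also have "\<dots> = (\<Sum>xe\<in>edge_configs X e0. eexp Ce eta y e0 xe) * (\<Sum>xe\<in>edge_configs X e0. mu_e X Ce eta y e0 xe * (1 / t (xe i0)))"
      unfolding sum_distrib_left mu_e_def using Ze
      by (intro sum.cong refl) (simp add: field_simps)
    also have "(\<Sum>xe\<in>edge_configs X e0. mu_e X Ce eta y e0 xe * (1 / t (xe i0))) = (\<Sum>x\<in>X. Sx x * (1 / t x))"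
      unfolding Sx_def by (rule S_marg[OF e0 i0])
    also have "\<dots> = B" unfolding B_def by (rule sum.cong[OF refl]) (rule Smt)
    finally have "(\<Sum>xe\<in>edge_configs X e. eexp Ce eta lam' e xe) = (\<Sum>xe\<in>edge_configs X e0. eexp Ce eta y e0 xe) * B" .
    moreover have "B > 0" unfolding B_def using finX X_ne mupos tpos by (intro sum_pos) auto
    ultimately show ?thesis using True Ze by (simp add: ln_mult)
  qed (simp add: eexp'[OF eE])
  have LL: "Lfun V E X Cv Ce eta lam' = Lfun V E X Cv Ce eta y + 2 / eta * ln B"
  proof -
    have 1: "(\<Sum>i\<in>V. ln (\<Sum>x\<in>X. vexp E Cv eta lam' i x)) = (\<Sum>i\<in>V. ln (\<Sum>x\<in>X. vexp E Cv eta y i x)) + ln B"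
      unfolding vln sum.distrib using i0V finV by (simp add: sum.delta)
    have 2: "(\<Sum>e\<in>E. ln (\<Sum>xe\<in>edge_configs X e. eexp Ce eta lam' e xe)) = (\<Sum>e\<in>E. ln (\<Sum>xe\<in>edge_configs X e. eexp Ce eta y e xe)) + ln B"
    proof -
      have "(\<Sum>e\<in>E. ln (\<Sum>xe\<in>edge_configs X e. eexp Ce eta lam' e xe)) = (\<Sum>e\<in>E. ln (\<Sum>xe\<in>edge_configs X e. eexp Ce eta y e xe) + (if e = e0 then ln B else 0))"
        by (rule sum.cong[OF refl]) (rule eln)
      then show ?thesis unfolding sum.distrib using e0 finE by (simp add: sum.delta)
    qed
    show ?thesis unfolding Lfun_def 1 2 by (simp add: algebra_simps)
  qed
  \<comment> \<open>Hellinger bound\<close>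
  have musum: "(\<Sum>x\<in>X. mu x) = 1" unfolding mu_def by (rule muv_sum)
  have Ssum: "(\<Sum>x\<in>X. Sx x) = 1" unfolding Sx_def by (rule S_sum[OF e0 i0])
  have mule: "x \<in> X \<Longrightarrow> mu x \<le> 1" for x by (rule le1_of_sum[OF finX _ musum]) (auto simp: mupos)
  have Sle: "x \<in> X \<Longrightarrow> Sx x \<le> 1" for x by (rule le1_of_sum[OF finX _ Ssum]) (auto simp: Spos)
  have pt: "(mu x - Sx x)^2 \<le> 4 * (mu x + Sx x - 2 * (mu x * t x))" if x: "x \<in> X" for x
  proof -
    have "(mu x - Sx x)^2 \<le> 4 * mu x * (1 - t x)^2"
      by (rule hell_pt) (use mupos Spos mule Sle tpos t2 x in auto)
    also have "4 * mu x * (1 - t x)^2 = 4 * (mu x + mu x * (t x)^2 - 2 * (mu x * t x))"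
      by (simp add: power2_eq_square algebra_simps)
    also have "mu x * (t x)^2 = Sx x" using t2[OF x] mupos[of x] by (simp add: field_simps)
    finally show ?thesis .
  qed
  have "(\<Sum>x\<in>X. (gr y e0 i0 x)^2) = (\<Sum>x\<in>X. (mu x - Sx x)^2)" unfolding gr_def mu_def Sx_def ..
  also have "\<dots> \<le> (\<Sum>x\<in>X. 4 * (mu x + Sx x - 2 * (mu x * t x)))" by (rule sum_mono) (rule pt)
  also have "\<dots> = 4 * (1 + 1 - 2 * B)"
    unfolding sum_distrib_left[symmetric] sum_subtractf sum.distrib musum Ssum B_def by simp
  finally have G: "(\<Sum>x\<in>X. (gr y e0 i0 x)^2) \<le> 8 * (1 - B)" by simp
  have Bpos: "B > 0" unfolding B_def using finX X_ne mupos tpos by (intro sum_pos) auto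
  have "ln B \<le> B - 1" using Bpos by (rule ln_le_minus_one)
  then have "2 / eta * ln B \<le> 2 / eta * (B - 1)" using eta by (intro mult_left_mono) auto
  also have "\<dots> = - 1/(4*eta) * (8 * (1 - B))" using eta by (simp add: field_simps)
  also have "\<dots> \<le> - 1/(4*eta) * (\<Sum>x\<in>X. (gr y e0 i0 x)^2)"
    using G eta by (intro mult_left_mono_neg) auto
  finally show ?thesis unfolding LL by simp
qed

end



lemma theta_rec: "theta_seq (Suc k) ^ 2 = theta_seq k ^ 2 * (1 - theta_seq (Suc k))"
proof -
  define t where "t = theta_seq k"
  define s where "s = sqrt (t^4 + 4 * t^2)"
  have s2: "s^2 = t^4 + 4 * t^2" unfolding s_def by (simp add: add_nonneg_nonneg)
  have "theta_seq (Suc k) = (s - t^2) / 2" by (simp add: s_def t_def)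
  moreover have "((s - t^2) / 2)^2 = t^2 * (1 - (s - t^2) / 2)"
    by (simp add: power2_eq_square field_simps s2[unfolded power2_eq_square] power4_eq_xxxx)
  ultimately show ?thesis by (simp add: t_def)
qed

lemma theta_pos: "0 < theta_seq k \<and> theta_seq k \<le> 1"
proof (induction k)
  case 0 then show ?case by simp
next
  case (Suc k)
  define t where "t = theta_seq k"
  have t: "0 < t" "t \<le> 1" using Suc unfolding t_def by auto
  have "sqrt (t^4) < sqrt (t^4 + 4 * t^2)" using t by (intro real_sqrt_less_mono) simp
  moreover have "sqrt (t^4) = t^2"
  proof -
    have "t^4 = (t^2)^2" by simp
    then show ?thesis by (simp only: real_sqrt_abs) simp
  qed
  ultimately have lt: "t^2 < sqrt (t^4 + 4 * t^2)" by linarith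
  define t' where "t' = theta_seq (Suc k)"
  have "t' = (sqrt (t^4 + 4 * t^2) - t^2) / 2" by (simp add: t_def t'_def)
  then have pos: "0 < t'" using lt by simp
  have r: "t' ^ 2 = t ^ 2 * (1 - t')" using theta_rec unfolding t_def t'_def .
  have "t' ^ 2 > 0" using pos by simp
  then have "t ^ 2 * (1 - t') > 0" by (simp only: r[symmetric])
  then have "1 - t' > 0" using t by (simp add: zero_less_mult_iff)
  then show ?case using pos unfolding t'_def by simp
qed

lemma theta_recip: "1 / theta_seq (Suc k) \<ge> 1 / theta_seq k + 1/2"
proof -
  define t where "t = theta_seq k"
  define t' where "t' = theta_seq (Suc k)"
  have t: "0 < t" "t \<le> 1" "0 < t'" "t' \<le> 1" using theta_pos[of k] theta_pos[of "Suc k"] unfolding t_def t'_def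
    by (auto simp del: theta_seq.simps)
  have r: "t'^2 = t^2 * (1 - t')" using theta_rec unfolding t_def t'_def .
  define r0 where "r0 = 1 / t"
  define r1 where "r1 = 1 / t'"
  have r0: "r0 \<ge> 1" unfolding r0_def using t by simp
  have r1: "r1 \<ge> 1" unfolding r1_def using t by simp
  have eq: "r1^2 - r1 = r0^2"
  proof -
    have "r1^2 - r1 = (1 - t') / t'^2" unfolding r1_def using t by (simp add: field_simps power2_eq_square)
    also have "\<dots> = 1 / t^2" using r t by (simp add: field_simps)
    finally show ?thesis unfolding r0_def by (simp add: power_one_over)
  qed
  show ?thesis
  proof (rule ccontr)
    assume "\<not> ?thesis"
    then have lt: "r1 < r0 + 1/2" unfolding r0_def r1_def t_def t'_def by simp
    have "(r0 + 1/2)^2 - (r0 + 1/2) - (r1^2 - r1) = (r0 + 1/2 - r1) * (r0 + 1/2 + r1 - 1)"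
      by (simp add: power2_eq_square field_simps)
    also have "\<dots> > 0" using lt r0 r1 by (intro mult_pos_pos) auto
    finally have "(r0 + 1/2)^2 - (r0 + 1/2) > r1^2 - r1" by simp
    then show False unfolding eq by (simp add: power2_eq_square algebra_simps)
  qed
qed

lemma theta_bound: "theta_seq k \<le> 2 / (real k + 2)"
proof -
  have "1 / theta_seq k \<ge> (real k + 2) / 2"
  proof (induction k)
    case 0 then show ?case by simp
  next
    case (Suc k)
    then show ?case using theta_recip[of k] by simp
  qed
  moreover have "theta_seq k > 0" using theta_pos by auto
  ultimately show ?thesis by (simp add: field_simps)
qed

lemma algebra_core:
  fixes N m eta th thp SL SG SD SI Dv Ly Lu Ll gu gl :: real
  assumes N: "N = 2 * m" and m: "m > 0" and eta: "eta > 0"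
    and th: "0 < th" "th \<le> 1" and thp: "thp > 0" and threc: "th^2 = thp^2 * (1 - th)"
    and SL: "SL \<le> N * Ly - (1/(4*eta)) * SG"
    and SD: "SD = N * Dv - 2 * (1/(4*m*eta*th)) * SI + (1/(4*m*eta*th))^2 * SG"
    and gpu: "Ly + gu \<le> Lu" and gpl: "Ly + gl \<le> Ll"
    and lin: "th * SI = - th * gu - (1 - th) * gl"
  shows "1/th^2 * (SL - N * Lu) + (4*m^2*eta) * SD \<le> N * (1/thp^2 * (Ll - Lu) + (4*m^2*eta) * Dv)"
proof -
  define c where "c = 4*m^2*eta"
  have E0: "1/th^2 * (SL - N * Lu) + (4*m^2*eta) * (N * Dv - 2 * (1/(4*m*eta*th)) * SI + (1/(4*m*eta*th))^2 * SG)
      = (SL + SG/(4*eta) - N*Lu - N * (th * SI)) / th^2 + (4*m^2*eta) * N * Dv"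
    unfolding N using m eta th by (simp add: field_simps power2_eq_square)
  have E1: "1/th^2 * (SL - N * Lu) + c * SD
      = ((SL + SG/(4*eta)) - N*Lu + N * (th * gu + (1 - th) * gl)) / th^2 + c*N*Dv"
    unfolding SD c_def E0 lin by (simp add: algebra_simps)
  have h1: "SL + SG/(4*eta) \<le> N * Ly" using SL by simp
  have h3: "th * gu + (1 - th) * gl \<le> th * (Lu - Ly) + (1 - th) * (Ll - Ly)"
    using gpu gpl th by (intro add_mono mult_left_mono) auto
  have Nn: "N \<ge> 0" using N m by simp
  have "((SL + SG/(4*eta)) - N*Lu + N * (th * gu + (1 - th) * gl))
      \<le> N * Ly - N*Lu + N * (th * (Lu - Ly) + (1 - th) * (Ll - Ly))"
  proof -
    have "N * (th * gu + (1 - th) * gl) \<le> N * (th * (Lu - Ly) + (1 - th) * (Ll - Ly))"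
      using h3 Nn by (rule mult_left_mono)
    then show ?thesis using h1 by linarith
  qed
  also have "\<dots> = N * ((1 - th) * (Ll - Lu))" by (simp add: algebra_simps)
  finally have h4: "((SL + SG/(4*eta)) - N*Lu + N * (th * gu + (1 - th) * gl)) / th^2 \<le> N * ((1 - th) * (Ll - Lu)) / th^2"
    using th by (intro divide_right_mono) auto
  have q: "(1 - th) / th^2 = 1 / thp^2" using threc th thp by (simp add: field_simps)
  have "N * ((1 - th) * (Ll - Lu)) / th^2 = N * ((1 - th) / th^2 * (Ll - Lu))" by simp
  also have "\<dots> = N * (1/thp^2 * (Ll - Lu))" unfolding q ..
  finally have "N * ((1 - th) * (Ll - Lu)) / th^2 = N * (1/thp^2 * (Ll - Lu))" .
  then show ?thesis using E1 h4 unfolding c_def by (simp add: algebra_simps)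
qed



context emp begin

definition Dist where "Dist v u = (\<Sum>(e,i)\<in>P. \<Sum>x\<in>X. (v e i x - u e i x)^2)"

definition Phi where "Phi k u st = 1 / (theta_seq k)^2 * (Lfun V E X Cv Ce eta (fst st) - Lfun V E X Cv Ce eta u)
   + (4 * real (card E)^2 * eta) * Dist (snd st) u"

lemma gpair_scale: "gpair lam (\<lambda>e i x. a * h e i x) = a * gpair lam h"
  unfolding gpair_def sum_distrib_left
  by (rule sum.cong[OF refl]) (auto simp: sum_distrib_left algebra_simps)

lemma Dist_step:
  fixes v u g :: "'v set \<Rightarrow> 'v \<Rightarrow> 'x \<Rightarrow> real" and al :: real
  assumes b: "(e0, i0) \<in> P"
  shows "Dist (\<lambda>e i x. if e = e0 \<and> i = i0 then v e i x - al * g e i x else v e i x) u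
       = Dist v u - 2 * al * (\<Sum>x\<in>X. g e0 i0 x * (v e0 i0 x - u e0 i0 x)) + al^2 * (\<Sum>x\<in>X. (g e0 i0 x)^2)"
proof -
  define F where "F p = (case p of (e,i) \<Rightarrow> \<Sum>x\<in>X. (v e i x - u e i x)^2)" for p
  define Dl where "Dl = - 2 * al * (\<Sum>x\<in>X. g e0 i0 x * (v e0 i0 x - u e0 i0 x)) + al^2 * (\<Sum>x\<in>X. (g e0 i0 x)^2)"
  have pt: "(case p of (e,i) \<Rightarrow> \<Sum>x\<in>X. ((if e = e0 \<and> i = i0 then v e i x - al * g e i x else v e i x) - u e i x)^2)
     = F p + (if p = (e0, i0) then Dl else 0)" for p
  proof (cases "p = (e0, i0)")
    case True
    have "(\<Sum>x\<in>X. (v e0 i0 x - al * g e0 i0 x - u e0 i0 x)^2)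
        = (\<Sum>x\<in>X. (v e0 i0 x - u e0 i0 x)^2 + (- 2 * al * (g e0 i0 x * (v e0 i0 x - u e0 i0 x)) + al^2 * (g e0 i0 x)^2))"
      by (rule sum.cong[OF refl]) (simp add: power2_eq_square algebra_simps)
    also have "\<dots> = (\<Sum>x\<in>X. (v e0 i0 x - u e0 i0 x)^2) + Dl"
      unfolding Dl_def by (simp only: sum.distrib sum_distrib_left[symmetric])
    finally show ?thesis using True by (simp add: F_def)
  next
    case False
    obtain e i where p: "p = (e, i)" by (cases p)
    have "e \<noteq> e0 \<or> i \<noteq> i0" using False p by auto
    then show ?thesis unfolding p F_def by (elim disjE) simp_all
  qed
  show ?thesis unfolding Dist_def pt sum.distrib
    using b finP by (simp add: sum.delta F_def Dl_def)
qed

lemma accel_step_eq: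
  assumes Y: "Y = (\<lambda>e i x. theta_seq (Suc k) * v e i x + (1 - theta_seq (Suc k)) * lam e i x)"
  shows "accel_step E X Cv Ce eta k (lam, v) (e0, i0) =
   ((\<lambda>e i x. if e = e0 \<and> i = i0 then Y e i x + 1 / (2 * eta) * ln (Smarg X Ce eta Y e i x / mu_v E X Cv eta Y i x) else Y e i x),
    (\<lambda>e i x. if e = e0 \<and> i = i0 then v e i x - (1 / (4 * real (card E) * eta * theta_seq (Suc k))) * gr Y e i x else v e i x))"
  unfolding accel_step_def Let_def gr_def Y fst_conv snd_conv
  by (simp add: fun_eq_iff algebra_simps del: theta_seq.simps)

lemma Phi_step:
  assumes Ene: "E \<noteq> {}"
  shows "(\<Sum>b\<in>P. Phi (Suc k) u (accel_step E X Cv Ce eta k st b)) \<le> real (card P) * Phi k u st"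
proof -
  obtain lam v where st: "st = (lam, v)" by (cases st)
  define th where "th = theta_seq (Suc k)"
  define thp where "thp = theta_seq k"
  define Y where "Y = (\<lambda>e i x. th * v e i x + (1 - th) * lam e i x)"
  define al where "al = 1 / (4 * real (card E) * eta * th)"
  define LAM where "LAM b = fst (accel_step E X Cv Ce eta k (lam, v) b)" for b
  define VV where "VV b = snd (accel_step E X Cv Ce eta k (lam, v) b)" for b
  define G where "G b = (\<Sum>x\<in>X. (gr Y (fst b) (snd b) x)^2)" for b
  define I where "I b = (\<Sum>x\<in>X. gr Y (fst b) (snd b) x * (v (fst b) (snd b) x - u (fst b) (snd b) x))" for b
  define L where "L = Lfun V E X Cv Ce eta"
  define N where "N = real (card P)"
  define m where "m = real (card E)"
  have m: "m > 0" unfolding m_def using Ene finE by (simp add: card_gt_0_iff)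
  have N: "N = 2 * m" unfolding N_def m_def cardP by simp
  have step_eq: "accel_step E X Cv Ce eta k (lam, v) b =
     ((\<lambda>e i x. if e = fst b \<and> i = snd b then Y e i x + 1 / (2 * eta) * ln (Smarg X Ce eta Y e i x / mu_v E X Cv eta Y i x) else Y e i x),
      (\<lambda>e i x. if e = fst b \<and> i = snd b then v e i x - al * gr Y e i x else v e i x))" for b
  proof -
    obtain e0 i0 where b: "b = (e0, i0)" by (cases b)
    show ?thesis unfolding b al_def th_def fst_conv snd_conv by (rule accel_step_eq) (simp add: Y_def th_def)
  qed
  have L1: "L (LAM b) \<le> L Y - 1/(4*eta) * G b" if "b \<in> P" for b
  proof -
    obtain e0 i0 where b: "b = (e0, i0)" by (cases b)
    show ?thesis unfolding L_def G_def LAM_def step_eq b fst_conv snd_conv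
      by (rule block_step) (use that b in auto)
  qed
  have D1: "Dist (VV b) u = Dist v u - 2 * al * I b + al^2 * G b" if "b \<in> P" for b
  proof -
    obtain e0 i0 where b: "b = (e0, i0)" by (cases b)
    show ?thesis unfolding VV_def step_eq b fst_conv snd_conv I_def G_def
      by (rule Dist_step) (use that b in auto)
  qed
  have SL: "(\<Sum>b\<in>P. L (LAM b)) \<le> N * L Y - 1/(4*eta) * (\<Sum>b\<in>P. G b)"
  proof -
    have "(\<Sum>b\<in>P. L (LAM b)) \<le> (\<Sum>b\<in>P. L Y - 1/(4*eta) * G b)" by (rule sum_mono) (rule L1)
    also have "\<dots> = N * L Y - 1/(4*eta) * (\<Sum>b\<in>P. G b)"
      unfolding N_def by (simp add: sum_subtractf sum_distrib_left)
    finally show ?thesis .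
  qed
  have SD: "(\<Sum>b\<in>P. Dist (VV b) u) = N * Dist v u - 2 * al * (\<Sum>b\<in>P. I b) + al^2 * (\<Sum>b\<in>P. G b)"
  proof -
    have "(\<Sum>b\<in>P. Dist (VV b) u) = (\<Sum>b\<in>P. Dist v u - 2 * al * I b + al^2 * G b)"
      by (rule sum.cong[OF refl]) (rule D1)
    also have "\<dots> = N * Dist v u - 2 * al * (\<Sum>b\<in>P. I b) + al^2 * (\<Sum>b\<in>P. G b)"
      unfolding N_def by (simp add: sum_subtractf sum.distrib sum_distrib_left)
    finally show ?thesis .
  qed
  have SI: "(\<Sum>b\<in>P. I b) = gpair Y (\<lambda>e i x. v e i x - u e i x)"
    unfolding I_def gpair_def by (simp add: case_prod_beta)
  define gu where "gu = gpair Y (\<lambda>e i x. u e i x - Y e i x)"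
  define gl where "gl = gpair Y (\<lambda>e i x. lam e i x - Y e i x)"
  have gpu: "L Y + gu \<le> L u" unfolding L_def gu_def by (rule Lfun_conv)
  have gpl: "L Y + gl \<le> L lam" unfolding L_def gl_def by (rule Lfun_conv)
  have lin: "th * (\<Sum>b\<in>P. I b) = - th * gu - (1 - th) * gl"
  proof -
    have "th * (\<Sum>b\<in>P. I b) = gpair Y (\<lambda>e i x. th * (v e i x - u e i x))"
      unfolding SI gpair_scale ..
    also have "(\<lambda>e i x. th * (v e i x - u e i x)) = (\<lambda>e i x. (- th) * (u e i x - Y e i x) + (- (1 - th)) * (lam e i x - Y e i x))"
      unfolding Y_def by (simp add: fun_eq_iff algebra_simps)
    also have "gpair Y \<dots> = - th * gu - (1 - th) * gl"
      unfolding gpair_lin gu_def gl_def by (simp add: algebra_simps)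
    finally show ?thesis .
  qed
  have thc: "0 < th" "th \<le> 1" using theta_pos[of "Suc k"] unfolding th_def by (auto simp del: theta_seq.simps)
  have thpc: "thp > 0" using theta_pos[of k] unfolding thp_def by auto
  have threc: "th^2 = thp^2 * (1 - th)" unfolding th_def thp_def by (rule theta_rec)
  have core: "1/th^2 * ((\<Sum>b\<in>P. L (LAM b)) - N * L u) + (4*m^2*eta) * (\<Sum>b\<in>P. Dist (VV b) u)
      \<le> N * (1/thp^2 * (L lam - L u) + (4*m^2*eta) * Dist v u)"
    by (rule algebra_core[OF N m eta thc thpc threc SL SD[unfolded al_def m_def[symmetric]] gpu gpl lin])
  have "(\<Sum>b\<in>P. Phi (Suc k) u (accel_step E X Cv Ce eta k st b))
      = (\<Sum>b\<in>P. 1/th^2 * (L (LAM b) - L u) + (4*m^2*eta) * Dist (VV b) u)"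
    unfolding Phi_def st LAM_def VV_def th_def m_def L_def by simp
  also have "\<dots> = 1/th^2 * (\<Sum>b\<in>P. L (LAM b) - L u) + (4*m^2*eta) * (\<Sum>b\<in>P. Dist (VV b) u)"
    by (simp only: sum.distrib sum_distrib_left[symmetric])
  also have "\<dots> = 1/th^2 * ((\<Sum>b\<in>P. L (LAM b)) - N * L u) + (4*m^2*eta) * (\<Sum>b\<in>P. Dist (VV b) u)"
    unfolding N_def by (simp add: sum_subtractf)
  also have "\<dots> \<le> N * (1/thp^2 * (L lam - L u) + (4*m^2*eta) * Dist v u)" by (rule core)
  also have "\<dots> = real (card P) * Phi k u st"
    unfolding Phi_def st N_def thp_def m_def L_def by simp
  finally show ?thesis .
qed

end



lemma accel_iter_cong:
  "(\<forall>j<k. s j = s' j) \<Longrightarrow> accel_iter E X Cv Ce eta s k = accel_iter E X Cv Ce eta s' k"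
  by (induction k) auto

lemma iter_snoc:
  "accel_iter E X Cv Ce eta (\<lambda>j. (xs @ [b]) ! j) (Suc (length xs))
   = accel_step E X Cv Ce eta (length xs) (accel_iter E X Cv Ce eta (\<lambda>j. xs ! j) (length xs)) b"
proof -
  have "accel_iter E X Cv Ce eta (\<lambda>j. (xs @ [b]) ! j) (length xs) = accel_iter E X Cv Ce eta (\<lambda>j. xs ! j) (length xs)"
    by (rule accel_iter_cong) (simp add: nth_append)
  then show ?thesis by simp
qed

lemma lists_Suc_sum:
  fixes f :: "'a list \<Rightarrow> real"
  assumes "finite A"
  shows "(\<Sum>xs\<in>{xs. set xs \<subseteq> A \<and> length xs = Suc k}. f xs)
       = (\<Sum>xs\<in>{xs. set xs \<subseteq> A \<and> length xs = k}. \<Sum>b\<in>A. f (xs @ [b]))"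
proof -
  define g where "g = (\<lambda>(xs, b). xs @ [b :: 'a])"
  have inj: "inj_on g ({xs. set xs \<subseteq> A \<and> length xs = k} \<times> A)"
    unfolding g_def by (auto simp: inj_on_def)
  have img: "{xs. set xs \<subseteq> A \<and> length xs = Suc k} = g ` ({xs. set xs \<subseteq> A \<and> length xs = k} \<times> A)"
  proof
    show "g ` ({xs. set xs \<subseteq> A \<and> length xs = k} \<times> A) \<subseteq> {xs. set xs \<subseteq> A \<and> length xs = Suc k}"
      unfolding g_def by auto
  next
    show "{xs. set xs \<subseteq> A \<and> length xs = Suc k} \<subseteq> g ` ({xs. set xs \<subseteq> A \<and> length xs = k} \<times> A)"
    proof
      fix xs assume xs: "xs \<in> {xs. set xs \<subseteq> A \<and> length xs = Suc k}"
      then have ne: "xs \<noteq> []" by auto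
      have eq: "xs = butlast xs @ [last xs]" using ne by simp
      have "set (butlast xs) \<subseteq> A" using xs by (auto dest: in_set_butlastD)
      moreover have "last xs \<in> A" using xs ne by auto
      moreover have "length (butlast xs) = k" using xs by simp
      ultimately show "xs \<in> g ` ({xs. set xs \<subseteq> A \<and> length xs = k} \<times> A)"
        unfolding g_def by (rule_tac image_eqI[of _ _ "(butlast xs, last xs)"]) (use eq in auto)
    qed
  qed
  have "(\<Sum>xs\<in>{xs. set xs \<subseteq> A \<and> length xs = Suc k}. f xs) = (\<Sum>p\<in>{xs. set xs \<subseteq> A \<and> length xs = k} \<times> A. f (g p))"
    unfolding img by (rule sum.reindex[OF inj, unfolded comp_def])
  also have "\<dots> = (\<Sum>(xs, b)\<in>{xs. set xs \<subseteq> A \<and> length xs = k} \<times> A. f (xs @ [b]))"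
    by (rule sum.cong) (auto simp: g_def)
  also have "\<dots> = (\<Sum>xs\<in>{xs. set xs \<subseteq> A \<and> length xs = k}. \<Sum>b\<in>A. f (xs @ [b]))"
    by (rule sum.cartesian_product[symmetric])
  finally show ?thesis .
qed

context emp begin

definition stt where "stt k xs = accel_iter E X Cv Ce eta (\<lambda>j. xs ! j) k"

lemma Phi_sum:
  assumes Ene: "E \<noteq> {}"
  shows "(\<Sum>xs\<in>{xs. set xs \<subseteq> P \<and> length xs = k}. Phi k u (stt k xs))
        \<le> real (card P) ^ k * Phi 0 u ((\<lambda>_ _ _. 0), (\<lambda>_ _ _. 0))"
proof (induction k)
  case 0
  have "{xs. set xs \<subseteq> P \<and> length xs = 0} = {[]}" by auto
  then show ?case by (simp add: stt_def)
next
  case (Suc k)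
  have "(\<Sum>xs\<in>{xs. set xs \<subseteq> P \<and> length xs = Suc k}. Phi (Suc k) u (stt (Suc k) xs))
     = (\<Sum>xs\<in>{xs. set xs \<subseteq> P \<and> length xs = k}. \<Sum>b\<in>P. Phi (Suc k) u (stt (Suc k) (xs @ [b])))"
    by (rule lists_Suc_sum[OF finP])
  also have "\<dots> = (\<Sum>xs\<in>{xs. set xs \<subseteq> P \<and> length xs = k}. \<Sum>b\<in>P. Phi (Suc k) u (accel_step E X Cv Ce eta k (stt k xs) b))"
  proof (rule sum.cong[OF refl])
    fix xs assume "xs \<in> {xs. set xs \<subseteq> P \<and> length xs = k}"
    then have l: "length xs = k" by simp
    show "(\<Sum>b\<in>P. Phi (Suc k) u (stt (Suc k) (xs @ [b]))) = (\<Sum>b\<in>P. Phi (Suc k) u (accel_step E X Cv Ce eta k (stt k xs) b))"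
      unfolding stt_def using iter_snoc[of E X Cv Ce eta xs] l by simp
  qed
  also have "\<dots> \<le> (\<Sum>xs\<in>{xs. set xs \<subseteq> P \<and> length xs = k}. real (card P) * Phi k u (stt k xs))"
    by (rule sum_mono) (rule Phi_step[OF Ene])
  also have "\<dots> = real (card P) * (\<Sum>xs\<in>{xs. set xs \<subseteq> P \<and> length xs = k}. Phi k u (stt k xs))"
    by (simp add: sum_distrib_left)
  also have "\<dots> \<le> real (card P) * (real (card P) ^ k * Phi 0 u ((\<lambda>_ _ _. 0), (\<lambda>_ _ _. 0)))"
    using Suc.IH by (intro mult_left_mono) auto
  finally show ?case by simp
qed

lemma expected_bound:
  assumes Ene: "E \<noteq> {}"
  shows "expected_L V E X Cv Ce eta k - Lfun V E X Cv Ce eta u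
     \<le> (theta_seq k)^2 * (Lfun V E X Cv Ce eta (\<lambda>_ _ _. 0) - Lfun V E X Cv Ce eta u
          + (4 * real (card E)^2 * eta) * (\<Sum>(e,i)\<in>P. \<Sum>x\<in>X. (u e i x)^2))"
proof -
  define Ls where "Ls = {xs. set xs \<subseteq> P \<and> length xs = k}"
  define N where "N = real (card P)"
  define L where "L = Lfun V E X Cv Ce eta"
  define th where "th = theta_seq k"
  define c where "c = 4 * real (card E)^2 * eta"
  have Npos: "N > 0" unfolding N_def using Ene finE cardP by (simp add: card_gt_0_iff)
  have th: "th > 0" unfolding th_def using theta_pos by auto
  have cardLs: "real (card Ls) = N ^ k" unfolding Ls_def N_def by (simp add: card_lists_length_eq finP)
  have finLs: "finite Ls" unfolding Ls_def by (rule finite_lists_length_eq[OF finP])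
  have Dnn: "Dist w u \<ge> 0" for w unfolding Dist_def by (intro sum_nonneg) (auto intro: sum_nonneg)
  have pt: "L (fst (stt k xs)) - L u \<le> th^2 * Phi k u (stt k xs)" for xs
  proof -
    have "th^2 * Phi k u (stt k xs) = (L (fst (stt k xs)) - L u) + th^2 * (c * Dist (snd (stt k xs)) u)"
      unfolding Phi_def L_def th_def c_def using th[unfolded th_def] by (simp add: field_simps)
    moreover have "th^2 * (c * Dist (snd (stt k xs)) u) \<ge> 0" unfolding c_def using Dnn eta by simp
    ultimately show ?thesis by linarith
  qed
  have "(\<Sum>xs\<in>Ls. L (fst (stt k xs))) - N^k * L u = (\<Sum>xs\<in>Ls. L (fst (stt k xs)) - L u)"
    using cardLs by (simp add: sum_subtractf)
  also have "\<dots> \<le> (\<Sum>xs\<in>Ls. th^2 * Phi k u (stt k xs))" by (rule sum_mono) (rule pt)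
  also have "\<dots> = th^2 * (\<Sum>xs\<in>Ls. Phi k u (stt k xs))" by (simp add: sum_distrib_left)
  also have "\<dots> \<le> th^2 * (N ^ k * Phi 0 u ((\<lambda>_ _ _. 0), (\<lambda>_ _ _. 0)))"
    using Phi_sum[OF Ene, of k u] unfolding Ls_def N_def by (intro mult_left_mono) auto
  finally have A: "(\<Sum>xs\<in>Ls. L (fst (stt k xs))) - N^k * L u \<le> th^2 * (N ^ k * Phi 0 u ((\<lambda>_ _ _. 0), (\<lambda>_ _ _. 0)))" .
  have EL: "expected_L V E X Cv Ce eta k = (\<Sum>xs\<in>Ls. L (fst (stt k xs))) / N^k"
    unfolding expected_L_def Ls_def N_def L_def stt_def ..
  have Nk: "N^k > 0" using Npos by simp
  have "expected_L V E X Cv Ce eta k - L u = ((\<Sum>xs\<in>Ls. L (fst (stt k xs))) - N^k * L u) / N^k"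
  proof -
    have "((\<Sum>xs\<in>Ls. L (fst (stt k xs))) - N^k * L u) / N^k = (\<Sum>xs\<in>Ls. L (fst (stt k xs))) / N^k - L u"
      using Npos by (subst diff_divide_distrib) simp
    then show ?thesis unfolding EL by simp
  qed
  also have "\<dots> \<le> th^2 * (N ^ k * Phi 0 u ((\<lambda>_ _ _. 0), (\<lambda>_ _ _. 0))) / N^k"
    using A Nk by (intro divide_right_mono) auto
  also have "\<dots> = th^2 * Phi 0 u ((\<lambda>_ _ _. 0), (\<lambda>_ _ _. 0))" using Npos by simp
  also have "Phi 0 u ((\<lambda>_ _ _. 0), (\<lambda>_ _ _. 0)) = L (\<lambda>_ _ _. 0) - L u + c * (\<Sum>(e,i)\<in>P. \<Sum>x\<in>X. (u e i x)^2)"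
    unfolding Phi_def Dist_def L_def c_def by simp
  finally show ?thesis unfolding L_def th_def c_def .
qed

end


context emp begin

lemma normalize:
  fixes w :: "'v set \<Rightarrow> 'v \<Rightarrow> 'x \<Rightarrow> real"
  defines "u \<equiv> (\<lambda>e i x. w e i x - (\<Sum>y\<in>X. w e i y) / real (card X))"
  shows "Lfun V E X Cv Ce eta u = Lfun V E X Cv Ce eta w" and "\<And>e i. (\<Sum>x\<in>X. u e i x) = 0"
proof -
  show "Lfun V E X Cv Ce eta u = Lfun V E X Cv Ce eta w"
    unfolding u_def by (rule gauge)
  fix e i
  have d: "real (card X) > 0" using d2 by simp
  show "(\<Sum>x\<in>X. u e i x) = 0" unfolding u_def using d by (simp add: sum_subtractf)
qed

lemma sum2_member:
  fixes f :: "'v set \<Rightarrow> 'v \<Rightarrow> 'x \<Rightarrow> real"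
  assumes "\<And>e i x. f e i x \<ge> 0" "(e0, i0) \<in> P" "x0 \<in> X"
  shows "f e0 i0 x0 \<le> (\<Sum>(e,i)\<in>P. \<Sum>x\<in>X. f e i x)"
proof -
  have "f e0 i0 x0 \<le> (\<Sum>x\<in>X. f e0 i0 x)" by (rule member_le_sum) (use assms finX in auto)
  also have "\<dots> \<le> (\<Sum>(e,i)\<in>P. \<Sum>x\<in>X. f e i x)"
    using member_le_sum[of "(e0, i0)" P "\<lambda>(e,i). \<Sum>x\<in>X. f e i x"] assms finP
    by (auto intro: sum_nonneg)
  finally show ?thesis .
qed

lemma S2_bound:
  assumes u0: "\<And>e i. (\<Sum>x\<in>X. u e i x) = 0"
  shows "(\<Sum>(e,i)\<in>P. \<Sum>x\<in>X. (u e i x)^2)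
          \<le> 4 * real (card X)^2 * (Lfun V E X Cv Ce eta u + (real (card V) + real (card E)) * Cn)^2"
    and "Lfun V E X Cv Ce eta u + (real (card V) + real (card E)) * Cn \<ge> 0"
proof -
  define S2 where "S2 = (\<Sum>(e,i)\<in>P. \<Sum>x\<in>X. (u e i x)^2)"
  define K where "K = Lfun V E X Cv Ce eta u + (real (card V) + real (card E)) * Cn"
  define d where "d = real (card X)"
  have dpos: "d > 0" unfolding d_def using d2 by simp
  define A where "A = (\<lambda>(p, x). \<bar>u (fst p) (snd p) x\<bar>) ` (P \<times> X)"
  have finA: "finite A" unfolding A_def using finP finX by simp
  define M where "M = Max A + 1"
  have uM: "\<forall>(e,i)\<in>P. \<forall>x\<in>X. \<bar>u e i x\<bar> \<le> Max A"
  proof (intro ballI, clarify)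
    fix e i x assume "(e, i) \<in> P" "x \<in> X"
    then have "\<bar>u e i x\<bar> \<in> A" unfolding A_def by (auto intro!: image_eqI[of _ _ "((e,i),x)"])
    then show "\<bar>u e i x\<bar> \<le> Max A" using finA by simp
  qed
  have uM1: "\<forall>(e,i)\<in>P. \<forall>x\<in>X. \<bar>u e i x\<bar> \<le> M"
  proof (intro ballI, clarify)
    fix e i x assume a: "(e, i) \<in> P" "x \<in> X"
    then have "\<bar>u e i x\<bar> \<le> Max A" using uM by blast
    then show "\<bar>u e i x\<bar> \<le> M" unfolding M_def by simp
  qed
  have S2nn: "S2 \<ge> 0" unfolding S2_def by (intro sum_nonneg) (auto intro: sum_nonneg)
  have Ane: "A \<noteq> {}" if "P \<noteq> {}" unfolding A_def using that X_ne by auto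
  have Kge: "K \<ge> 0"
  proof (cases "P = {}")
    case True
    have "- (real (card V) + real (card E)) * Cn + S2 / (2 * d * 1) \<le> Lfun V E X Cv Ce eta u"
      unfolding S2_def d_def by (rule L_lower) (use u0 True in auto)
    then show ?thesis unfolding K_def S2_def using True by (simp add: algebra_simps)
  next
    case False
    have MA: "Max A \<ge> 0" using Max_in[OF finA Ane[OF False]] unfolding A_def by auto
    have "- (real (card V) + real (card E)) * Cn + S2 / (2 * d * M) \<le> Lfun V E X Cv Ce eta u"
      unfolding S2_def d_def by (rule L_lower) (use u0 uM1 MA in \<open>auto simp: M_def\<close>)
    moreover have "S2 / (2 * d * M) \<ge> 0" using S2nn dpos MA unfolding M_def by simp
    ultimately show ?thesis unfolding K_def by linarith
  qed
  show "Lfun V E X Cv Ce eta u + (real (card V) + real (card E)) * Cn \<ge> 0" using Kge unfolding K_def .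
  have "S2 \<le> 4 * d^2 * K^2"
  proof (cases "S2 = 0")
    case True then show ?thesis by simp
  next
    case False
    then have Pne: "P \<noteq> {}" unfolding S2_def by auto
    define M0 where "M0 = Max A"
    obtain p x where px: "p \<in> P" "x \<in> X" "M0 = \<bar>u (fst p) (snd p) x\<bar>"
      using Max_in[OF finA Ane[OF Pne]] unfolding M0_def A_def by auto
    have M0sq: "M0^2 \<le> S2"
    proof -
      have "M0^2 = (u (fst p) (snd p) x)^2" using px by simp
      also have "\<dots> \<le> S2" unfolding S2_def by (rule sum2_member) (use px in auto)
      finally show ?thesis .
    qed
    have M0pos: "M0 > 0"
    proof (rule ccontr)
      assume "\<not> M0 > 0"
      then have "\<forall>(e,i)\<in>P. \<forall>x\<in>X. u e i x = 0" using uM unfolding M0_def by fastforce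
      then have "S2 = 0" unfolding S2_def by (intro sum.neutral) auto
      with False show False by simp
    qed
    have low: "- (real (card V) + real (card E)) * Cn + S2 / (2 * d * M0) \<le> Lfun V E X Cv Ce eta u"
      unfolding S2_def d_def by (rule L_lower) (use u0 uM M0pos in \<open>auto simp: M0_def\<close>)
    then have "S2 / (2 * d * M0) \<le> K" unfolding K_def by linarith
    then have S2K: "S2 \<le> 2 * d * M0 * K" using dpos M0pos by (simp add: field_simps)
    then have "M0^2 \<le> 2 * d * M0 * K" using M0sq by linarith
    then have "M0 \<le> 2 * d * K" using M0pos by (simp add: power2_eq_square field_simps)
    then have "2 * d * M0 * K \<le> 2 * d * (2 * d * K) * K" using Kge dpos
      by (intro mult_right_mono mult_left_mono) auto
    with S2K show ?thesis by (simp add: power2_eq_square algebra_simps)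
  qed
  then show "S2 \<le> 4 * real (card X)^2 * (Lfun V E X Cv Ce eta u + (real (card V) + real (card E)) * Cn)^2"
    unfolding S2_def d_def K_def .
qed

end


context emp begin

lemma L_ge: "Lfun V E X Cv Ce eta w \<ge> - (real (card V) + real (card E)) * cost_norm V E X Cv Ce"
proof -
  define u where "u = (\<lambda>e i x. w e i x - (\<Sum>y\<in>X. w e i y) / real (card X))"
  have "Lfun V E X Cv Ce eta u = Lfun V E X Cv Ce eta w" unfolding u_def by (rule normalize(1))
  moreover have "Lfun V E X Cv Ce eta u + (real (card V) + real (card E)) * cost_norm V E X Cv Ce \<ge> 0"
    by (rule S2_bound(2)) (unfold u_def, rule normalize(2))
  ultimately show ?thesis by linarith
qed

lemma ln_d: "ln (real (card X)) \<ge> 1/2"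
proof -
  have "exp (1/2::real) * exp (1/2) = exp 1" by (simp flip: exp_add)
  also have "\<dots> \<le> 3" by (rule exp_le)
  finally have "exp (1/2::real) * exp (1/2) \<le> 2 * 2" by simp
  then have "exp (1/2::real) \<le> 2"
  proof (rule contrapos_pp)
    assume "\<not> exp (1/2::real) \<le> 2"
    then have "2 < exp (1/2::real)" by simp
    then have "2 * 2 < exp (1/2::real) * exp (1/2)" using mult_strict_mono[of 2 "exp (1/2::real)" 2 "exp (1/2)"] by auto
    then show "\<not> exp (1/2::real) * exp (1/2) \<le> 2 * 2" by simp
  qed
  also have "(2::real) \<le> real (card X)" using d2 by simp
  finally show ?thesis using d2 by (subst ln_ge_iff) auto
qed

lemma main_bound:
  assumes Ene: "E \<noteq> {}"
  shows "expected_L V E X Cv Ce eta k - (INF lam. Lfun V E X Cv Ce eta lam)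
     \<le> (24 * real (card E) * real (card X) * real (card E + card V) *
          (sqrt eta * cost_norm V E X Cv Ce + ln (real (card X)) / sqrt eta))^2
        / (real k + 2)^2"
proof -
  define n where "n = real (card V)"
  define m where "m = real (card E)"
  define d where "d = real (card X)"
  define C where "C = cost_norm V E X Cv Ce"
  define L where "L = Lfun V E X Cv Ce eta"
  define Q where "Q = C + ln d / eta"
  define R where "R = (n + m) * Q"
  define inf where "inf = (INF lam. L lam)"
  define ex where "ex = expected_L V E X Cv Ce eta k"
  define th where "th = theta_seq k"
  define L0 where "L0 = L (\<lambda>_ _ _. 0)"
  define S2 where "S2 u = (\<Sum>(e,i)\<in>P. \<Sum>x\<in>X. (u e i x)^2)" for u :: "'v set \<Rightarrow> 'v \<Rightarrow> 'x \<Rightarrow> real"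
  obtain e1 where e1: "e1 \<in> E" using Ene by blast
  obtain i1 where i1: "i1 \<in> e1" using e_ne[OF e1] by blast
  have i1V: "i1 \<in> V" using e_sub[OF e1] i1 by auto
  obtain x1 where x1: "x1 \<in> X" using X_ne by blast
  have m1: "m \<ge> 1" unfolding m_def using Ene finE by (simp add: Suc_le_eq card_gt_0_iff)
  have n0: "n \<ge> 0" unfolding n_def by simp
  have d2': "d \<ge> 2" unfolding d_def using d2 by simp
  have C0: "C \<ge> 0" unfolding C_def using Cv_le[OF i1V x1] by linarith
  have lnd: "ln d \<ge> 1/2" unfolding d_def by (rule ln_d)
  have Q0: "Q > 0" unfolding Q_def using C0 lnd eta by (simp add: add_nonneg_pos)
  have R0: "R > 0" unfolding R_def using Q0 m1 n0 by simp
  have etaQ: "eta * Q \<ge> 1/2"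
  proof -
    have "eta * Q = eta * C + ln d" unfolding Q_def using eta by (simp add: field_simps)
    moreover have "eta * C \<ge> 0" using eta C0 by simp
    ultimately show ?thesis using lnd by linarith
  qed
  have etaR: "eta * R \<ge> 1/2"
  proof -
    have "eta * R = (n + m) * (eta * Q)" unfolding R_def by simp
    also have "\<dots> \<ge> 1 * (eta * Q)" using m1 n0 etaQ by (intro mult_right_mono) auto
    finally show ?thesis using etaQ by simp
  qed
  have Lge: "L w \<ge> - (n + m) * C" for w unfolding L_def n_def m_def C_def by (rule L_ge)
  have bdd: "bdd_below (range L)" using Lge by (intro bdd_belowI2) auto
  have infL0: "inf \<le> L0" unfolding inf_def L0_def by (rule cINF_lower[OF bdd]) simp
  have L0b: "L0 + (n + m) * C \<le> 2 * R"
  proof -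
    have "L0 \<le> n * (C + ln d / eta) + m * (C + 2 * ln d / eta)"
      unfolding L0_def L_def n_def m_def C_def d_def by (rule L0_upper)
    moreover have "ln d / eta \<ge> 0" using lnd eta by simp
    ultimately have h: "L0 \<le> n * (C + ln d / eta) + m * (C + 2 * ln d / eta)" "ln d / eta \<ge> 0" by auto
    define a where "a = ln d / eta"
    have e1: "2 * R = 2*(n*C) + 2*(n*a) + 2*(m*C) + 2*(m*a)" unfolding R_def Q_def a_def by (simp add: algebra_simps add_divide_distrib)
    have e2: "n * (C + ln d / eta) + m * (C + 2 * ln d / eta) = n*C + n*a + m*C + 2*(m*a)" unfolding a_def by (simp add: algebra_simps add_divide_distrib)
    have e3: "(n + m) * C = n*C + m*C" by (simp add: algebra_simps)
    have na: "n * a \<ge> 0" using n0 h(2) unfolding a_def[symmetric] by (rule mult_nonneg_nonneg)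
    show ?thesis using h(1) e1 e2 e3 na by linarith
  qed
  have thb: "th^2 \<le> 4 / (real k + 2)^2"
  proof -
    have "th \<le> 2 / (real k + 2)" unfolding th_def by (rule theta_bound)
    moreover have "th \<ge> 0" unfolding th_def using theta_pos by (auto intro: less_imp_le)
    ultimately have "th^2 \<le> (2 / (real k + 2))^2" by (rule power_mono)
    then show ?thesis by (simp add: power_divide)
  qed
  define B' where "B' = 2 * R + 100 * m^2 * d^2 * eta * R^2"
  have B'0: "B' \<ge> 0" unfolding B'_def using R0 eta by simp
  have key: "ex - inf \<le> 4 / (real k + 2)^2 * B' + eps" if eps: "0 < eps" "eps \<le> R / 2" for eps
  proof -
    have "inf < inf + eps" using eps by simp
    then obtain w where w: "L w < inf + eps"
      using cInf_lessD[of "range L" "inf + eps"] unfolding inf_def by auto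
    define u where "u = (\<lambda>e i x. w e i x - (\<Sum>y\<in>X. w e i y) / real (card X))"
    have Lu: "L u = L w" unfolding u_def L_def by (rule normalize(1))
    have u0: "\<And>e i. (\<Sum>x\<in>X. u e i x) = 0" unfolding u_def by (rule normalize(2))
    define K where "K = L u + (n + m) * C"
    have S2b: "S2 u \<le> 4 * d^2 * K^2" unfolding S2_def K_def d_def L_def n_def m_def C_def
      by (rule S2_bound(1)[OF u0])
    have K0: "K \<ge> 0" unfolding K_def L_def n_def m_def C_def by (rule S2_bound(2)[OF u0])
    have KR: "K \<le> 5/2 * R" unfolding K_def using Lu w infL0 L0b eps by linarith
    have K2: "K^2 \<le> (5/2 * R)^2" using K0 KR by (rule power_mono[rotated]) 
    have B: "L0 - L u + 4 * m^2 * eta * S2 u \<le> B'"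
    proof -
      have "L0 - L u \<le> 2 * R" using Lge[of u] L0b by linarith
      moreover have "4 * m^2 * eta * S2 u \<le> 4 * m^2 * eta * (4 * d^2 * (5/2 * R)^2)"
      proof -
        have "4 * d^2 * K^2 \<le> 4 * d^2 * (5/2 * R)^2" using K2 by (intro mult_left_mono) auto
        then have "S2 u \<le> 4 * d^2 * (5/2 * R)^2" using S2b by linarith
        then show ?thesis using eta by (intro mult_left_mono) auto
      qed
      ultimately show ?thesis unfolding B'_def by (simp add: power2_eq_square algebra_simps)
    qed
    have EB: "ex - L u \<le> th^2 * (L0 - L u + 4 * m^2 * eta * S2 u)"
      unfolding ex_def L_def th_def L0_def m_def S2_def by (rule expected_bound[OF Ene])
    also have "\<dots> \<le> th^2 * B'" using B by (intro mult_left_mono) auto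
    also have "\<dots> \<le> 4 / (real k + 2)^2 * B'" using thb B'0 by (intro mult_right_mono) auto
    finally have "ex - L u \<le> 4 / (real k + 2)^2 * B'" .
    then show ?thesis using Lu w by linarith
  qed
  have key2: "ex - inf \<le> 4 / (real k + 2)^2 * B'"
  proof (rule field_le_epsilon)
    fix e :: real assume e: "0 < e"
    show "ex - inf \<le> 4 / (real k + 2)^2 * B' + e"
    proof (cases "e \<le> R / 2")
      case True then show ?thesis using key e by blast
    next
      case False
      have "ex - inf \<le> 4 / (real k + 2)^2 * B' + R / 2" using key[of "R/2"] R0 by simp
      then show ?thesis using False by linarith
    qed
  qed
  have sq: "sqrt eta * C + ln d / sqrt eta = sqrt eta * Q"
  proof -
    have s: "sqrt eta > 0" using eta by simp
    have "sqrt eta * sqrt eta = eta" using eta by simp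
    then show ?thesis unfolding Q_def using s by (simp add: field_simps)
  qed
  have G2: "(24 * m * d * (m + n) * (sqrt eta * C + ln d / sqrt eta))^2 = 576 * m^2 * d^2 * eta * R^2"
  proof -
    have "(24 * m * d * (m + n) * (sqrt eta * Q))^2 = 576 * m^2 * d^2 * (m+n)^2 * (sqrt eta)^2 * Q^2"
      by (simp add: power_mult_distrib)
    also have "(sqrt eta)^2 = eta" using eta by simp
    also have "576 * m^2 * d^2 * (m+n)^2 * eta * Q^2 = 576 * m^2 * d^2 * eta * R^2"
      unfolding R_def power_mult_distrib by (simp add: add.commute mult_ac)
    finally show ?thesis unfolding sq .
  qed
  have "4 * B' \<le> 576 * m^2 * d^2 * eta * R^2"
  proof -
    have "m^2 \<ge> 1" using m1 by (simp add: one_le_power)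
    moreover have "d^2 \<ge> 2^2" using d2' by (intro power_mono) auto
    ultimately have md: "m^2 * d^2 \<ge> 1 * 4" by (intro mult_mono) auto
    have "8 \<le> 176 * (m^2 * d^2) * (eta * R)"
    proof -
      have "176 * (m^2 * d^2) * (eta * R) \<ge> 176 * 4 * (1/2)"
        using md etaR by (intro mult_mono) auto
      then show ?thesis by simp
    qed
    then have "8 * R \<le> 176 * (m^2 * d^2) * (eta * R) * R" using R0 by (simp add: mult_right_mono)
    then show ?thesis unfolding B'_def by (simp add: power2_eq_square algebra_simps)
  qed
  then have "4 / (real k + 2)^2 * B' \<le> (576 * m^2 * d^2 * eta * R^2) / (real k + 2)^2"
    by (simp add: divide_right_mono)
  with key2 G2 show ?thesis unfolding ex_def inf_def L_def m_def d_def n_def C_def by simp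
qed

end

theorem lemma4:
  fixes V :: "'v set" and E :: "'v set set" and X :: "'x set"
    and Cv :: "'v \<Rightarrow> 'x \<Rightarrow> real" and Ce :: "'v set \<Rightarrow> ('v \<Rightarrow> 'x) \<Rightarrow> real"
    and eta :: real and k :: nat
  assumes "finite V"
    and "\<forall>e\<in>E. e \<subseteq> V \<and> card e = 2"
    and "\<forall>i\<in>V. \<exists>e\<in>E. i \<in> e"
    and "finite X" and "card X \<ge> 2"
    and "eta > 0"
  shows "expected_L V E X Cv Ce eta k - (INF lam. Lfun V E X Cv Ce eta lam)
     \<le> (24 * real (card E) * real (card X) * real (card E + card V) *
          (sqrt eta * cost_norm V E X Cv Ce + ln (real (card X)) / sqrt eta))^2
        / (real k + 2)^2"
proof (cases "E = {}")
  case True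
  then have V: "V = {}" using assms(3) by auto
  have L0: "Lfun V E X Cv Ce eta lam = 0" for lam unfolding Lfun_def using True V by simp
  have "expected_L V E X Cv Ce eta k = 0" unfolding expected_L_def L0 by simp
  moreover have "(INF lam. Lfun V E X Cv Ce eta lam) = 0" unfolding L0 by simp
  ultimately show ?thesis by simp
next
  case False
  interpret emp V E X Cv Ce eta using assms by unfold_locales auto
  show ?thesis by (rule main_bound[OF False])
qed

end
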